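(* Let $u$ and $v$ be vertices of $G$. When routing from $u$ to $v$, the routing algorithm reaches $v$ after traversing at most $O(\log n)$ edges.
   Context: Let $T$ be a rooted tree on $n$ vertices with positive edge weights; $\delta_T(a,b)$ is the weight of the path in $T$ from $a$ to $b$. Ancestor/descendant refer to $T$, and a vertex counts as its own ancestor and descendant; "deepest"/"highest" refer to depth in $T$. $T_v$ is the subtree of $T$ rooted at $v$. For every non-leaf vertex $v$ fix a child $c_1(v)$ with $|T_{c_1(v)}|$ maximal; edges $(v,c_1(v))$ are leftmost. A subtree $R$ of $T$ is rooted at its vertex closest to the root, $rt(R)$, and inherits the leftmost labelling; $R_v$ is the subtree of $R$ rooted at $v$. $P_R(v)$ is the longest downward path from $v$ in $R$ using only leftmost edges, with last vertex $l(v)$; $l(R):=l(rt(R))$. A vertex $v$ of $R$ is $d$-balanced if $|R_{c_1(v)}|\le |R|-d$ (with $|R_{c_1(v)}|=0$ if $c_1(v)$ is undefined or not in $R$); $b_d(v)$ is the first $d$-balanced vertex on $P_R(v)$, or NULL. $CV(R,d)=\emptyset$ if $b_d(rt(R))$ is NULL, else $\{b\}\cup\bigcup_w CV(R_w,d)$ with $b=b_d(rt(R))$ and $w$ ranging over children of $b$ in $R$. Fix an integer $k\ge4$; for a subtree $R$ with $m$ vertices, $C_R=V(R)$ if $k\ge m/2-1$, else $C_R=CV(R,m/k)\cup\{l(R),rt(R)\}$. Canonical subtrees: $T$ is canonical; if $R$ is canonical, each component of $R$ minus $C_R$ is canonical. Each vertex $v$ lies in $C_R$ for exactly one canonical $R$,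 denoted $T^v$. The spanner $G$ has vertex set $V(T)$ and edges: all edges of $T$, and all pairs of distinct vertices of $C_R$ for every canonical $R$; edge $(a,b)$ has weight $\delta_T(a,b)$. Routing algorithm from current vertex $u$ to destination $v$, repeated until $v$ is reached: Case 0: if $v$ is adjacent to $u$, move to $v$. Case 1: $u$ is an ancestor of $v$; let $X$ be the vertices of $C_{T^u}$ that are ancestors of $v$, $x$ the deepest; move to $x$, then to the child of $x$ that is an ancestor of $v$. Case 2: $u$ is a descendant of $v$; let $X$ be the vertices of $C_{T^u}$ that are descendants of $v$ and ancestors of $u$, $x$ the highest; move to $x$, then to the parent of $x$. Case 3: $u$ is neither; let $X$ be the vertices of $C_{T^u}$ that are ancestors of $v$ but not of $u$, and $Y$ those that are ancestors of $u$ but not of $v$, $y$ the highest vertex of $Y$. Case 3 a): $X=\emptyset$: move to $y$, then to the parent of $y$. Case 3 b): $X\neq\emptyset$: with $x$ the deepest vertex of $X$ and $x'$ the child of $x$ that is an ancestor of $v$, move to $x$, then to $x'$. (Moving to the current vertex means staying.) *)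

theory Defs
  imports Complex_Main
begin

definition anc :: "('a \<Rightarrow> 'a) \<Rightarrow> 'a \<Rightarrow> 'a \<Rightarrow> bool" where
  "anc p a b \<longleftrightarrow> (\<exists>i. (p ^^ i) b = a)"

definition rooted_tree :: "'a set \<Rightarrow> 'a \<Rightarrow> ('a \<Rightarrow> 'a) \<Rightarrow> bool" where
  "rooted_tree V r p \<longleftrightarrow> finite V \<and> r \<in> V \<and> p r = r \<and> (\<forall>v\<in>V. p v \<in> V) \<and> (\<forall>v\<in>V. anc p r v)"

definition children :: "'a set \<Rightarrow> 'a \<Rightarrow> ('a \<Rightarrow> 'a) \<Rightarrow> 'a \<Rightarrow> 'a set" where
  "children V r p v = {w \<in> V. w \<noteq> r \<and> p w = v}"

definition desc :: "'a set \<Rightarrow> ('a \<Rightarrow> 'a) \<Rightarrow> 'a \<Rightarrow> 'a set" where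
  "desc V p v = {w \<in> V. anc p v w}"

definition leftmost_choice :: "'a set \<Rightarrow> 'a \<Rightarrow> ('a \<Rightarrow> 'a) \<Rightarrow> ('a \<Rightarrow> 'a) \<Rightarrow> bool" where
  "leftmost_choice V r p c1 \<longleftrightarrow> (\<forall>v\<in>V. children V r p v \<noteq> {} \<longrightarrow>
      c1 v \<in> children V r p v \<and>
      (\<forall>w\<in>children V r p v. card (desc V p w) \<le> card (desc V p (c1 v))))"

(* a subtree of T (connected vertex set), identified with its vertex set *)
definition is_subtree :: "'a set \<Rightarrow> ('a \<Rightarrow> 'a) \<Rightarrow> 'a set \<Rightarrow> bool" where
  "is_subtree V p S \<longleftrightarrow> S \<subseteq> V \<and> S \<noteq> {} \<and>
     (\<exists>t\<in>S. \<forall>w\<in>S. anc p t w \<and> (\<forall>x. anc p t x \<and> anc p x w \<longrightarrow> x \<in> S))"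

definition rt :: "('a \<Rightarrow> 'a) \<Rightarrow> 'a set \<Rightarrow> 'a" where
  "rt p R = (THE t. t \<in> R \<and> (\<forall>w\<in>R. anc p t w))"

definition subR :: "('a \<Rightarrow> 'a) \<Rightarrow> 'a set \<Rightarrow> 'a \<Rightarrow> 'a set" where
  "subR p R v = {w \<in> R. anc p v w}"

definition lstep :: "'a set \<Rightarrow> 'a \<Rightarrow> ('a \<Rightarrow> 'a) \<Rightarrow> ('a \<Rightarrow> 'a) \<Rightarrow> 'a set \<Rightarrow> 'a \<Rightarrow> bool" where
  "lstep V r p c1 R w \<longleftrightarrow> children V r p w \<noteq> {} \<and> c1 w \<in> R"

definition onP :: "'a set \<Rightarrow> 'a \<Rightarrow> ('a \<Rightarrow> 'a) \<Rightarrow> ('a \<Rightarrow> 'a) \<Rightarrow> 'a set \<Rightarrow> 'a \<Rightarrow> 'a \<Rightarrow> bool" where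
  "onP V r p c1 R v w \<longleftrightarrow> (\<exists>i. w = (c1 ^^ i) v \<and> (\<forall>j<i. lstep V r p c1 R ((c1 ^^ j) v)))"

definition lend :: "'a set \<Rightarrow> 'a \<Rightarrow> ('a \<Rightarrow> 'a) \<Rightarrow> ('a \<Rightarrow> 'a) \<Rightarrow> 'a set \<Rightarrow> 'a \<Rightarrow> 'a" where
  "lend V r p c1 R v = (THE w. onP V r p c1 R v w \<and> \<not> lstep V r p c1 R w)"

definition csize :: "'a set \<Rightarrow> 'a \<Rightarrow> ('a \<Rightarrow> 'a) \<Rightarrow> ('a \<Rightarrow> 'a) \<Rightarrow> 'a set \<Rightarrow> 'a \<Rightarrow> nat" where
  "csize V r p c1 R v = (if lstep V r p c1 R v then card (subR p R (c1 v)) else 0)"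

definition balanced :: "'a set \<Rightarrow> 'a \<Rightarrow> ('a \<Rightarrow> 'a) \<Rightarrow> ('a \<Rightarrow> 'a) \<Rightarrow> 'a set \<Rightarrow> real \<Rightarrow> 'a \<Rightarrow> bool" where
  "balanced V r p c1 R d v \<longleftrightarrow> real (csize V r p c1 R v) \<le> real (card R) - d"

definition bfirst :: "'a set \<Rightarrow> 'a \<Rightarrow> ('a \<Rightarrow> 'a) \<Rightarrow> ('a \<Rightarrow> 'a) \<Rightarrow> 'a set \<Rightarrow> real \<Rightarrow> 'a \<Rightarrow> 'a option" where
  "bfirst V r p c1 R d v =
     (if \<exists>w. onP V r p c1 R v w \<and> balanced V r p c1 R d w
      then Some (THE w. onP V r p c1 R v w \<and> balanced V r p c1 R d w \<and>
                 (\<forall>w'. onP V r p c1 R v w' \<and> balanced V r p c1 R d w' \<longrightarrow> anc p w w'))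
      else None)"

inductive inCV :: "'a set \<Rightarrow> 'a \<Rightarrow> ('a \<Rightarrow> 'a) \<Rightarrow> ('a \<Rightarrow> 'a) \<Rightarrow> 'a set \<Rightarrow> real \<Rightarrow> 'a \<Rightarrow> bool"
  for V r p c1 where
  cv_here: "bfirst V r p c1 R d (rt p R) = Some b \<Longrightarrow> inCV V r p c1 R d b"
| cv_rec: "bfirst V r p c1 R d (rt p R) = Some b \<Longrightarrow> w \<in> children V r p b \<Longrightarrow> w \<in> R \<Longrightarrow>
           inCV V r p c1 (subR p R w) d x \<Longrightarrow> inCV V r p c1 R d x"

definition Cset :: "'a set \<Rightarrow> 'a \<Rightarrow> ('a \<Rightarrow> 'a) \<Rightarrow> ('a \<Rightarrow> 'a) \<Rightarrow> nat \<Rightarrow> 'a set \<Rightarrow> 'a set" where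
  "Cset V r p c1 k R =
     (if real k \<ge> real (card R) / 2 - 1 then R
      else {x. inCV V r p c1 R (real (card R) / real k) x} \<union> {lend V r p c1 R (rt p R), rt p R})"

definition is_component :: "'a set \<Rightarrow> ('a \<Rightarrow> 'a) \<Rightarrow> 'a set \<Rightarrow> 'a set \<Rightarrow> bool" where
  "is_component V p A S \<longleftrightarrow> is_subtree V p S \<and> S \<subseteq> A \<and>
     (\<forall>S'. is_subtree V p S' \<and> S \<subseteq> S' \<and> S' \<subseteq> A \<longrightarrow> S' = S)"

inductive canonical :: "'a set \<Rightarrow> 'a \<Rightarrow> ('a \<Rightarrow> 'a) \<Rightarrow> ('a \<Rightarrow> 'a) \<Rightarrow> nat \<Rightarrow> 'a set \<Rightarrow> bool"
  for V r p c1 k where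
  can_top: "canonical V r p c1 k V"
| can_rec: "canonical V r p c1 k R \<Longrightarrow> is_component V p (R - Cset V r p c1 k R) S \<Longrightarrow>
            canonical V r p c1 k S"

definition CT :: "'a set \<Rightarrow> 'a \<Rightarrow> ('a \<Rightarrow> 'a) \<Rightarrow> ('a \<Rightarrow> 'a) \<Rightarrow> nat \<Rightarrow> 'a \<Rightarrow> 'a set" where
  "CT V r p c1 k u = Cset V r p c1 k (THE R. canonical V r p c1 k R \<and> u \<in> Cset V r p c1 k R)"

definition adjG :: "'a set \<Rightarrow> 'a \<Rightarrow> ('a \<Rightarrow> 'a) \<Rightarrow> ('a \<Rightarrow> 'a) \<Rightarrow> nat \<Rightarrow> 'a \<Rightarrow> 'a \<Rightarrow> bool" where
  "adjG V r p c1 k a b \<longleftrightarrow> a \<in> V \<and> b \<in> V \<and> a \<noteq> b \<and>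
     ((b \<noteq> r \<and> p b = a) \<or> (a \<noteq> r \<and> p a = b) \<or>
      (\<exists>R. canonical V r p c1 k R \<and> a \<in> Cset V r p c1 k R \<and> b \<in> Cset V r p c1 k R))"

definition deepest :: "('a \<Rightarrow> 'a) \<Rightarrow> 'a set \<Rightarrow> 'a" where
  "deepest p X = (THE x. x \<in> X \<and> (\<forall>y\<in>X. anc p y x))"

definition highest :: "('a \<Rightarrow> 'a) \<Rightarrow> 'a set \<Rightarrow> 'a" where
  "highest p X = (THE x. x \<in> X \<and> (\<forall>y\<in>X. anc p x y))"

definition child_toward :: "'a set \<Rightarrow> 'a \<Rightarrow> ('a \<Rightarrow> 'a) \<Rightarrow> 'a \<Rightarrow> 'a \<Rightarrow> 'a" where
  "child_toward V r p x v = (THE c. c \<in> children V r p x \<and> anc p c v)"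

definition mv :: "'a \<Rightarrow> 'a \<Rightarrow> nat" where
  "mv a b = (if a = b then 0 else 1)"

(* one iteration of the routing algorithm from u towards v:
   returns (new current vertex, number of edges traversed in this iteration) *)
definition route_step :: "'a set \<Rightarrow> 'a \<Rightarrow> ('a \<Rightarrow> 'a) \<Rightarrow> ('a \<Rightarrow> 'a) \<Rightarrow> nat \<Rightarrow> 'a \<Rightarrow> 'a \<Rightarrow> 'a \<times> nat" where
  "route_step V r p c1 k v u =
    (let C = CT V r p c1 k u in
     if adjG V r p c1 k u v then (v, 1)
     else if anc p u v then
       (let x = deepest p {x \<in> C. anc p x v} in (child_toward V r p x v, mv u x + 1))
     else if anc p v u then
       (let x = highest p {x \<in> C. anc p v x \<and> anc p x u} in (p x, mv u x + 1))
     else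
       (let X = {x \<in> C. anc p x v \<and> \<not> anc p x u};
            Y = {y \<in> C. anc p y u \<and> \<not> anc p y v};
            y = highest p Y in
        if X = {} then (p y, mv u y + 1)
        else (let x = deepest p X in (child_toward V r p x v, mv u x + 1))))"

definition route_pos :: "'a set \<Rightarrow> 'a \<Rightarrow> ('a \<Rightarrow> 'a) \<Rightarrow> ('a \<Rightarrow> 'a) \<Rightarrow> nat \<Rightarrow> 'a \<Rightarrow> 'a \<Rightarrow> nat \<Rightarrow> 'a" where
  "route_pos V r p c1 k u v i = ((\<lambda>x. fst (route_step V r p c1 k v x)) ^^ i) u"

end

theory Submission
  imports Defs
begin

locale RT =
  fixes V :: "'a set" and r :: 'a and p :: "'a \<Rightarrow> 'a" and c1 :: "'a \<Rightarrow> 'a" and k :: nat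
  assumes tree: "rooted_tree V r p" and lc: "leftmost_choice V r p c1" and k4: "k \<ge> 4"
begin

lemma finV: "finite V" and rV: "r \<in> V" and pr: "p r = r" and pV: "x \<in> V \<Longrightarrow> p x \<in> V"
  and ancr: "x \<in> V \<Longrightarrow> anc p r x"
  using tree unfolding rooted_tree_def by auto

lemma funpowV: "x \<in> V \<Longrightarrow> (p^^i) x \<in> V"
  by (induction i) (auto simp: pV)

lemma funpow_r: "(p^^i) r = r"
  by (induction i) (auto simp: pr)

definition dep :: "'a \<Rightarrow> nat" where "dep x = (LEAST i. (p^^i) x = r)"

lemma dep_ex: "x \<in> V \<Longrightarrow> (p^^(dep x)) x = r"
  using ancr[of x] unfolding dep_def anc_def by (auto intro: LeastI)

lemma dep_le: "(p^^i) x = r \<Longrightarrow> dep x \<le> i"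
  unfolding dep_def by (rule Least_le)

lemma dep_r: "dep r = 0"
  using dep_le[of 0 r] by simp

lemma dep0: "x \<in> V \<Longrightarrow> dep x = 0 \<Longrightarrow> x = r"
  using dep_ex[of x] by simp

lemma dep_p: assumes "x \<in> V" "x \<noteq> r" shows "dep x = Suc (dep (p x))"
proof -
  have px: "p x \<in> V" using pV assms by auto
  have "(p^^(Suc (dep (p x)))) x = r" using dep_ex[OF px] by (simp add: funpow_Suc_right del: funpow.simps)
  hence le: "dep x \<le> Suc (dep (p x))" by (rule dep_le)
  have "dep x \<noteq> 0" using dep0 assms by auto
  then obtain m where m: "dep x = Suc m" by (cases "dep x") auto
  have "(p^^m) (p x) = r" using dep_ex[OF assms(1)] m by (simp add: funpow_Suc_right del: funpow.simps)
  hence "dep (p x) \<le> m" by (rule dep_le)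
  thus ?thesis using le m by simp
qed

lemma anc_refl[simp]: "anc p a a"
  unfolding anc_def by (metis funpow_0)

lemma anc_trans: assumes "anc p a b" "anc p b c" shows "anc p a c"
proof -
  obtain i j where "(p^^i) b = a" "(p^^j) c = b" using assms unfolding anc_def by auto
  then have "(p^^(i+j)) c = a" by (simp add: funpow_add)
  then show ?thesis unfolding anc_def by blast
qed

lemma anc_V: "anc p a b \<Longrightarrow> b \<in> V \<Longrightarrow> a \<in> V"
  unfolding anc_def using funpowV by auto

lemma anc_pself: "anc p (p b) b"
  unfolding anc_def by (rule exI[of _ 1]) simp

lemma dep_funpow: "b \<in> V \<Longrightarrow> dep ((p^^i) b) \<le> dep b \<and> ((p^^i) b \<noteq> b \<longrightarrow> dep ((p^^i) b) < dep b)"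
proof (induction i)
  case 0 then show ?case by simp
next
  case (Suc i)
  define z where "z = (p^^i) b"
  have zV: "z \<in> V" using funpowV Suc.prems z_def by auto
  have e: "(p^^Suc i) b = p z" by (simp add: z_def)
  show ?case
  proof (cases "z = r")
    case True
    have "(p^^Suc i) b = r" using e pr True by simp
    moreover have "r \<noteq> b \<Longrightarrow> 0 < dep b" using dep0[OF Suc.prems] by (cases "dep b") auto
    ultimately show ?thesis using dep_r by auto
  next
    case False
    then show ?thesis using e dep_p[OF zV False] Suc z_def by auto
  qed
qed

lemma anc_dep: "anc p a b \<Longrightarrow> b \<in> V \<Longrightarrow> dep a \<le> dep b"
  unfolding anc_def using dep_funpow by blast

lemma anc_dep_less: "anc p a b \<Longrightarrow> b \<in> V \<Longrightarrow> a \<noteq> b \<Longrightarrow> dep a < dep b"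
  unfolding anc_def using dep_funpow by blast

lemma anc_antisym: assumes "anc p a b" "anc p b a" "b \<in> V" shows "a = b"
proof (rule ccontr)
  assume ne: "a \<noteq> b"
  have aV: "a \<in> V" using anc_V assms by blast
  have "dep a < dep b" using anc_dep_less assms ne by blast
  moreover have "dep b \<le> dep a" using anc_dep assms aV by blast
  ultimately show False by simp
qed

lemma anc_lin: "anc p a x \<Longrightarrow> anc p b x \<Longrightarrow> anc p a b \<or> anc p b a"
proof -
  assume "anc p a x" "anc p b x"
  then obtain i j where i: "(p^^i) x = a" and j: "(p^^j) x = b" unfolding anc_def by auto
  show ?thesis
  proof (cases "i \<le> j")
    case True
    then obtain d where d: "j = d + i" by (metis le_add_diff_inverse2)
    then have "(p^^d) a = b" using i j by (simp add: funpow_add)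
    then show ?thesis unfolding anc_def by auto
  next
    case False
    then obtain d where d: "i = d + j" by (metis le_add_diff_inverse2 nat_le_linear)
    then have "(p^^d) b = a" using i j by (simp add: funpow_add)
    then show ?thesis unfolding anc_def by auto
  qed
qed

lemma anc_p: assumes "anc p a b" "a \<noteq> b" shows "anc p a (p b)"
proof -
  obtain i where i: "(p^^i) b = a" using assms unfolding anc_def by auto
  then obtain j where "i = Suc j" using assms by (cases i) auto
  then have "(p^^j) (p b) = a" using i by (simp add: funpow_Suc_right del: funpow.simps)
  then show ?thesis unfolding anc_def by auto
qed

lemma anc_of_r: "anc p a r \<Longrightarrow> a = r"
  unfolding anc_def using funpow_r by auto

lemma child_facts: "c \<in> children V r p x \<Longrightarrow> c \<in> V \<and> c \<noteq> r \<and> p c = x \<and> x \<in> V"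
  unfolding children_def using pV by auto

lemma childI: "c \<in> V \<Longrightarrow> c \<noteq> r \<Longrightarrow> c \<in> children V r p (p c)"
  unfolding children_def by auto

lemma dep_child: "c \<in> children V r p x \<Longrightarrow> dep c = Suc (dep x)"
  using child_facts dep_p by metis

lemma not_anc_child: assumes "c \<in> children V r p x" shows "\<not> anc p c x"
proof
  assume "anc p c x"
  then have "dep c \<le> dep x" using anc_dep child_facts[OF assms] by blast
  then show False using dep_child[OF assms] by simp
qed

lemma anc_child: "c \<in> children V r p x \<Longrightarrow> anc p x c"
  using child_facts anc_pself by metis

lemma c1_child: "x \<in> V \<Longrightarrow> children V r p x \<noteq> {} \<Longrightarrow> c1 x \<in> children V r p x"
  using lc unfolding leftmost_choice_def by auto

lemma anc_strict_child: "anc p a b \<Longrightarrow> a \<noteq> b \<Longrightarrow> b \<in> V \<Longrightarrow> \<exists>c\<in>children V r p a. anc p c b"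
proof (induction "dep b" arbitrary: b rule: less_induct)
  case less
  have br: "b \<noteq> r" using less anc_of_r by auto
  have pb: "p b \<in> V" using pV less by auto
  have a: "anc p a (p b)" using anc_p less by auto
  show ?case
  proof (cases "p b = a")
    case True
    have "b \<in> children V r p a" using childI[of b] less br True by auto
    then show ?thesis by (intro bexI[of _ b]) auto
  next
    case False
    have "dep (p b) < dep b" using dep_p[of b] less br by auto
    then obtain c where "c \<in> children V r p a" "anc p c (p b)" using less(1)[of "p b"] a False pb by auto
    then show ?thesis using anc_trans anc_pself by metis
  qed
qed

lemma child_unique: assumes "c \<in> children V r p a" "c' \<in> children V r p a" "anc p c b" "anc p c' b"
  shows "c = c'"
proof (rule ccontr)
  assume ne: "c \<noteq> c'"
  have "anc p c c' \<or> anc p c' c" using anc_lin assms by blast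
  then show False
  proof
    assume "anc p c c'"
    then have "anc p c (p c')" using anc_p ne by blast
    then show False using child_facts[OF assms(2)] not_anc_child[OF assms(1)] by simp
  next
    assume "anc p c' c"
    then have "anc p c' (p c)" using anc_p ne by metis
    then show False using child_facts[OF assms(1)] not_anc_child[OF assms(2)] by simp
  qed
qed

abbreviation st where "st S \<equiv> is_subtree V p S"

lemma subtree_D: assumes "st S"
  shows "S \<subseteq> V" "S \<noteq> {}" "rt p S \<in> S" "\<And>w. w \<in> S \<Longrightarrow> anc p (rt p S) w"
    "\<And>w x. w \<in> S \<Longrightarrow> anc p (rt p S) x \<Longrightarrow> anc p x w \<Longrightarrow> x \<in> S"
proof -
  obtain t where t1: "t \<in> S" and t2: "\<And>w. w \<in> S \<Longrightarrow> anc p t w"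
    and t3: "\<And>w x. w \<in> S \<Longrightarrow> anc p t x \<Longrightarrow> anc p x w \<Longrightarrow> x \<in> S"
    using assms unfolding is_subtree_def by metis
  have SV: "S \<subseteq> V" using assms unfolding is_subtree_def by simp
  have eq: "rt p S = t" unfolding rt_def
  proof (rule the_equality)
    show "t \<in> S \<and> (\<forall>w\<in>S. anc p t w)" using t1 t2 by simp
  next
    fix t' assume h: "t' \<in> S \<and> (\<forall>w\<in>S. anc p t' w)"
    then have "anc p t' t" using t1 by simp
    moreover have "anc p t t'" using t2 h by simp
    moreover have "t \<in> V" using SV t1 by blast
    ultimately show "t' = t" using anc_antisym by blast
  qed
  show "S \<subseteq> V" by (rule SV)
  show "S \<noteq> {}" using t1 by blast
  show "rt p S \<in> S" unfolding eq by (rule t1)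
  show "\<And>w. w \<in> S \<Longrightarrow> anc p (rt p S) w" unfolding eq by (rule t2)
  show "\<And>w x. w \<in> S \<Longrightarrow> anc p (rt p S) x \<Longrightarrow> anc p x w \<Longrightarrow> x \<in> S" unfolding eq by (rule t3)
qed

lemma rt_eq: assumes "st S" "t \<in> S" "\<And>w. w \<in> S \<Longrightarrow> anc p t w" shows "rt p S = t"
proof -
  have a: "rt p S \<in> S" "rt p S \<in> V" using subtree_D[OF assms(1)] by auto
  have "anc p (rt p S) t" using subtree_D(4)[OF assms(1) assms(2)] .
  moreover have "anc p t (rt p S)" using assms(3)[OF a(1)] .
  ultimately show ?thesis using anc_antisym a(2) by blast
qed

lemma convex: assumes "st S" "x \<in> S" "y \<in> S" "anc p x z" "anc p z y" shows "z \<in> S"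
proof -
  have "anc p (rt p S) z" using anc_trans[OF subtree_D(4)[OF assms(1) assms(2)] assms(4)] .
  then show ?thesis using subtree_D(5)[OF assms(1) assms(3)] assms(5) by blast
qed

lemma subtreeI: assumes "S \<subseteq> V" "t \<in> S" "\<And>w. w \<in> S \<Longrightarrow> anc p t w"
  "\<And>w x. w \<in> S \<Longrightarrow> anc p t x \<Longrightarrow> anc p x w \<Longrightarrow> x \<in> S" shows "st S"
  unfolding is_subtree_def using assms by blast

lemma subtree_V: "st V"
proof (rule subtreeI[of V r])
  fix w x assume "w \<in> V" "anc p x w" then show "x \<in> V" using anc_V by blast
qed (auto simp: rV ancr)

lemma subtree_union1: assumes "st A" "st B" "x \<in> A" "x \<in> B" "anc p (rt p A) (rt p B)"
  shows "st (A \<union> B)"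
proof (rule subtreeI[of _ "rt p A"])
  show "A \<union> B \<subseteq> V" using subtree_D(1)[OF assms(1)] subtree_D(1)[OF assms(2)] by blast
  show "rt p A \<in> A \<union> B" using subtree_D(3)[OF assms(1)] by blast
  fix w assume w: "w \<in> A \<union> B"
  then show "anc p (rt p A) w"
  proof
    assume "w \<in> A" then show ?thesis using subtree_D(4)[OF assms(1)] by blast
  next
    assume "w \<in> B" then show ?thesis using subtree_D(4)[OF assms(2)] assms(5) anc_trans by blast
  qed
  fix z assume z: "anc p (rt p A) z" "anc p z w"
  show "z \<in> A \<union> B"
  proof (cases "w \<in> A")
    case True then show ?thesis using convex[OF assms(1) subtree_D(3)[OF assms(1)] True] z by blast
  next
    case False
    then have wB: "w \<in> B" using w by blast
    have "anc p (rt p B) z \<or> anc p z (rt p B)" using anc_lin subtree_D(4)[OF assms(2) wB] z(2) by blast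
    then show ?thesis
    proof
      assume "anc p (rt p B) z" then show ?thesis using subtree_D(5)[OF assms(2) wB] z by blast
    next
      assume "anc p z (rt p B)"
      then have "anc p z x" using anc_trans subtree_D(4)[OF assms(2) assms(4)] by blast
      then show ?thesis using convex[OF assms(1) subtree_D(3)[OF assms(1)] assms(3)] z by blast
    qed
  qed
qed

lemma subtree_union: assumes "st A" "st B" "x \<in> A" "x \<in> B" shows "st (A \<union> B)"
proof -
  have "anc p (rt p A) (rt p B) \<or> anc p (rt p B) (rt p A)"
    using anc_lin subtree_D(4)[OF assms(1) assms(3)] subtree_D(4)[OF assms(2) assms(4)] by blast
  then show ?thesis
  proof
    assume "anc p (rt p A) (rt p B)" then show ?thesis using subtree_union1[OF assms] by blast
  next
    assume "anc p (rt p B) (rt p A)"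
    then have "st (B \<union> A)" using subtree_union1[OF assms(2,1,4,3)] by blast
    then show ?thesis by (simp add: Un_commute)
  qed
qed

lemma subtree_path: assumes "b \<in> V" "anc p a b" shows "st {z. anc p a z \<and> anc p z b}"
proof (rule subtreeI[of _ a])
  show "{z. anc p a z \<and> anc p z b} \<subseteq> V" using anc_V assms(1) by blast
  show "a \<in> {z. anc p a z \<and> anc p z b}" using assms by simp
  fix w assume w: "w \<in> {z. anc p a z \<and> anc p z b}" then show "anc p a w" by simp
  fix x assume "anc p a x" "anc p x w" then show "x \<in> {z. anc p a z \<and> anc p z b}"
    using anc_trans[of x w b] w by simp
qed

lemma subtree_subR: assumes "st R" "w \<in> R" shows "st (subR p R w)" "rt p (subR p R w) = w"
proof -
  show "st (subR p R w)" unfolding subR_def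
  proof (rule subtreeI[of _ w])
    show "{x \<in> R. anc p w x} \<subseteq> V" using subtree_D(1)[OF assms(1)] by blast
    show "w \<in> {x \<in> R. anc p w x}" using assms(2) by simp
    fix y assume y: "y \<in> {x \<in> R. anc p w x}" then show "anc p w y" by simp
    fix x assume x: "anc p w x" "anc p x y"
    have "x \<in> R" using convex[OF assms(1) assms(2) _ x] y by blast
    then show "x \<in> {x \<in> R. anc p w x}" using x by simp
  qed
  then show "rt p (subR p R w) = w"
    by (rule rt_eq) (use assms(2) in \<open>auto simp: subR_def\<close>)
qed

lemma subtree_edge: assumes "c \<in> children V r p x" shows "st {x, c}"
proof (rule subtreeI[of _ x])
  show "{x, c} \<subseteq> V" using child_facts[OF assms] by auto
  show "x \<in> {x, c}" by simp
  fix w assume "w \<in> {x, c}" then show "anc p x w" using anc_child[OF assms] by auto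
  fix z assume z: "anc p x z" "anc p z w"
  show "z \<in> {x, c}"
  proof (cases "w = x")
    case True then show ?thesis using z anc_antisym child_facts[OF assms] by blast
  next
    case False
    then have wc: "w = c" using \<open>w \<in> {x,c}\<close> by auto
    show ?thesis
    proof (cases "z = c")
      case False
      have "anc p z (p c)" using anc_p z wc False by blast
      then have "anc p z x" using child_facts[OF assms] by simp
      then show ?thesis using z anc_antisym child_facts[OF assms] by blast
    qed simp
  qed
qed

lemma comp_D: "is_component V p A S \<Longrightarrow> st S \<and> S \<subseteq> A"
  unfolding is_component_def by auto

lemma comp_absorb: assumes "is_component V p A S" "st P" "P \<subseteq> A" "x \<in> P" "x \<in> S" shows "P \<subseteq> S"
proof -
  have "st (S \<union> P)" using subtree_union comp_D[OF assms(1)] assms by blast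
  moreover have "S \<subseteq> S \<union> P" by blast
  moreover have "S \<union> P \<subseteq> A" using assms comp_D[OF assms(1)] by blast
  ultimately have "S \<union> P = S" using assms(1) unfolding is_component_def by blast
  then show ?thesis by blast
qed

lemma comp_unique: assumes "is_component V p A S" "is_component V p A S'" "x \<in> S" "x \<in> S'" shows "S = S'"
  using comp_absorb[OF assms(1) _ _ assms(4,3)] comp_absorb[OF assms(2) _ _ assms(3,4)] comp_D assms by blast

lemma comp_edge: assumes "is_component V p A S" "x \<in> S" "c \<in> children V r p x" "c \<in> A" shows "c \<in> S"
  using comp_absorb[OF assms(1) subtree_edge[OF assms(3)], of x] assms comp_D by blast

lemma comp_edge_up: assumes "is_component V p A S" "x \<in> S" "c \<in> children V r p x" "c \<in> S" "x \<in> A" shows "x \<in> S"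
  using assms by blast

lemma comp_up: assumes "is_component V p A S" "x \<in> S" "x \<noteq> r" "p x \<in> A" shows "p x \<in> S"
proof -
  have xV: "x \<in> V" using comp_D[OF assms(1)] subtree_D assms by blast
  have "x \<in> children V r p (p x)" using childI xV assms by blast
  then show ?thesis using comp_absorb[OF assms(1) subtree_edge, of x "p x"] assms comp_D by blast
qed

lemma comp_exists: assumes "A \<subseteq> V" "x \<in> A" shows "\<exists>S. is_component V p A S \<and> x \<in> S"
proof -
  define P where "P = (\<lambda>S. st S \<and> x \<in> S \<and> S \<subseteq> A)"
  have "st {x}" by (rule subtreeI[of _ x]) (use assms anc_antisym in auto)
  then have P0: "P {x}" using assms unfolding P_def by auto
  have bnd: "\<forall>S. P S \<longrightarrow> card S < Suc (card V)"
  proof (intro allI impI)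
    fix S assume "P S"
    then have "S \<subseteq> V" using assms unfolding P_def by blast
    then have "card S \<le> card V" using finV card_mono by blast
    then show "card S < Suc (card V)" by simp
  qed
  have ex: "\<exists>S. P S \<and> (\<forall>y. P y \<longrightarrow> card y \<le> card S)"
    by (rule Lattices_Big.ex_has_greatest_nat[of P "{x}" card "Suc (card V)", OF P0 bnd])
  then obtain S where S1: "P S" and S2: "\<forall>y. P y \<longrightarrow> card y \<le> card S"
    by (elim exE conjE)
  have S: "P S" "\<And>S'. P S' \<Longrightarrow> card S' \<le> card S" using S1 S2 by blast+
  have fA: "finite A" using finite_subset[OF assms(1) finV] .
  have fS: "\<And>S'. S' \<subseteq> A \<Longrightarrow> finite S'" using finite_subset[OF _ fA] by blast
  have "is_component V p A S" unfolding is_component_def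
  proof (intro conjI allI impI)
    show "st S" "S \<subseteq> A" using S unfolding P_def by auto
    fix S' assume S': "st S' \<and> S \<subseteq> S' \<and> S' \<subseteq> A"
    then have "P S'" using S unfolding P_def by auto
    then have "card S' \<le> card S" using S by blast
    moreover have "finite S'" using fS S' by blast
    ultimately show "S' = S" using S' card_seteq by blast
  qed
  then show ?thesis using S unfolding P_def by auto
qed

lemma subtree_root_up: assumes "st S" "w \<in> S" "p w \<notin> S" shows "rt p S = w"
proof (rule ccontr)
  assume ne: "rt p S \<noteq> w"
  then have "anc p (rt p S) (p w)" using anc_p subtree_D[OF assms(1)] assms by blast
  then have "p w \<in> S" using subtree_D(5)[OF assms(1) assms(2)] anc_pself by blast
  then show False using assms by blast
qed

lemma deepest_ex: assumes "X \<noteq> {}" "\<And>x. x \<in> X \<Longrightarrow> anc p x v" "v \<in> V"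
  shows "\<exists>e\<in>X. \<forall>x\<in>X. anc p x e"
proof -
  obtain x0 where x0: "x0 \<in> X" using assms by auto
  have bnd: "\<forall>y. y \<in> X \<longrightarrow> dep y < Suc (dep v)"
  proof (intro allI impI)
    fix y assume "y \<in> X" then have "dep y \<le> dep v" using assms anc_dep by blast
    then show "dep y < Suc (dep v)" by simp
  qed
  obtain e where e: "e \<in> X" "\<And>y. y \<in> X \<Longrightarrow> dep y \<le> dep e"
    using Lattices_Big.ex_has_greatest_nat[of "\<lambda>y. y \<in> X" x0 dep "Suc (dep v)", OF x0 bnd] by auto
  have "\<forall>x\<in>X. anc p x e"
  proof
    fix x assume x: "x \<in> X"
    have "anc p x e \<or> anc p e x" using anc_lin assms(2) x e(1) by blast
    moreover have "anc p e x \<Longrightarrow> e \<noteq> x \<Longrightarrow> False"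
    proof -
      assume "anc p e x" "e \<noteq> x"
      moreover have "x \<in> V" using anc_V assms x by blast
      ultimately have "dep e < dep x" using anc_dep_less by blast
      then show False using e(2)[OF x] by simp
    qed
    ultimately show "anc p x e" by auto
  qed
  then show ?thesis using e by auto
qed

lemma highest_ex: assumes "X \<noteq> {}" "\<And>x. x \<in> X \<Longrightarrow> anc p x u" "u \<in> V"
  shows "\<exists>h\<in>X. \<forall>x\<in>X. anc p h x"
proof -
  obtain x0 where x0: "x0 \<in> X" using assms by auto
  obtain h where h: "h \<in> X" "\<And>y. y \<in> X \<Longrightarrow> dep h \<le> dep y"
    using ex_has_least_nat[of "\<lambda>y. y \<in> X" x0 dep, OF x0] by auto
  have "\<forall>x\<in>X. anc p h x"
  proof
    fix x assume x: "x \<in> X"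
    have "anc p x h \<or> anc p h x" using anc_lin assms(2) x h(1) by blast
    moreover have "anc p x h \<Longrightarrow> h \<noteq> x \<Longrightarrow> False"
    proof -
      assume "anc p x h" "h \<noteq> x"
      moreover have "h \<in> V" using anc_V assms h by blast
      ultimately have "dep x < dep h" using anc_dep_less by metis
      then show False using h(2)[OF x] by simp
    qed
    ultimately show "anc p h x" by auto
  qed
  then show ?thesis using h by auto
qed

lemma deepest_eq: assumes "e \<in> X" "\<And>x. x \<in> X \<Longrightarrow> anc p x e" "X \<subseteq> V" shows "deepest p X = e"
  unfolding deepest_def by (rule the_equality) (use assms anc_antisym in blast)+

lemma highest_eq: assumes "h \<in> X" "\<And>x. x \<in> X \<Longrightarrow> anc p h x" "X \<subseteq> V" shows "highest p X = h"
  unfolding highest_def by (rule the_equality) (use assms anc_antisym in blast)+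

lemma child_toward_eq: assumes "c \<in> children V r p x" "anc p c v" shows "child_toward V r p x v = c"
  unfolding child_toward_def by (rule the_equality) (use assms child_unique in blast)+

lemma child_toward_ex: assumes "anc p x v" "x \<noteq> v" "v \<in> V"
  shows "child_toward V r p x v \<in> children V r p x \<and> anc p (child_toward V r p x v) v"
proof -
  obtain c where "c \<in> children V r p x" "anc p c v" using anc_strict_child[OF assms] by blast
  then show ?thesis using child_toward_eq by simp
qed

lemma lstep_child: "x \<in> V \<Longrightarrow> lstep V r p c1 R x \<Longrightarrow> c1 x \<in> children V r p x \<and> c1 x \<in> R"
  unfolding lstep_def using c1_child by blast

lemma chain: "v \<in> V \<Longrightarrow> (\<forall>j<i. lstep V r p c1 R ((c1^^j) v)) \<Longrightarrow>
   (c1^^i) v \<in> V \<and> dep ((c1^^i) v) = dep v + i \<and> anc p v ((c1^^i) v)"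
proof (induction i)
  case 0 then show ?case by simp
next
  case (Suc i)
  then have IH: "(c1^^i) v \<in> V" "dep ((c1^^i) v) = dep v + i" "anc p v ((c1^^i) v)" by auto
  have "lstep V r p c1 R ((c1^^i) v)" using Suc.prems by simp
  then have ch: "c1 ((c1^^i) v) \<in> children V r p ((c1^^i) v)" using lstep_child IH(1) by blast
  have e: "(c1^^Suc i) v = c1 ((c1^^i) v)" by simp
  show ?case unfolding e using child_facts[OF ch] dep_child[OF ch] IH anc_trans[OF IH(3) anc_child[OF ch]] by simp
qed

lemma chain_anc: assumes "v \<in> V" "\<forall>j<i'. lstep V r p c1 R ((c1^^j) v)" "i \<le> i'"
  shows "anc p ((c1^^i) v) ((c1^^i') v)"
proof -
  obtain d where d: "i' = d + i" using assms(3) by (metis le_add_diff_inverse2)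
  have iV: "(c1^^i) v \<in> V" using chain[OF assms(1), of i R] assms(2,3) by auto
  have "\<forall>j<d. lstep V r p c1 R ((c1^^j) ((c1^^i) v))"
  proof (intro allI impI)
    fix j assume "j < d"
    then have "j + i < i'" using d by simp
    then have "lstep V r p c1 R ((c1^^(j+i)) v)" using assms(2) by blast
    then show "lstep V r p c1 R ((c1^^j) ((c1^^i) v))" by (simp add: funpow_add)
  qed
  then have "anc p ((c1^^i) v) ((c1^^d) ((c1^^i) v))" using chain[OF iV] by blast
  then show ?thesis using d by (simp add: funpow_add)
qed

lemma chain_R: "v \<in> V \<Longrightarrow> v \<in> R \<Longrightarrow> (\<forall>j<i. lstep V r p c1 R ((c1^^j) v)) \<Longrightarrow> (c1^^i) v \<in> R"
proof (induction i)
  case 0 then show ?case by simp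
next
  case (Suc i)
  then have "(c1^^i) v \<in> V" using chain[of v i R] by auto
  moreover have "lstep V r p c1 R ((c1^^i) v)" using Suc.prems by simp
  ultimately show ?case using lstep_child by simp
qed

lemma path_end_ex: assumes "v \<in> V" shows "\<exists>i. (\<forall>j<i. lstep V r p c1 R ((c1^^j) v)) \<and> \<not> lstep V r p c1 R ((c1^^i) v)"
proof (rule ccontr)
  assume na: "\<not> ?thesis"
  have all: "\<forall>j<i. lstep V r p c1 R ((c1^^j) v)" for i
  proof (induction i)
    case (Suc i) then show ?case using na less_Suc_eq by auto
  qed simp
  define f where "f = (\<lambda>i. (c1^^i) v)"
  have fd: "dep (f i) = dep v + i" for i using chain[OF assms all] f_def by simp
  have "inj f" unfolding inj_def
  proof (intro allI impI)
    fix x y assume "f x = f y"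
    then have "dep v + x = dep v + y" using fd by metis
    then show "x = y" by simp
  qed
  moreover have "range f \<subseteq> V" using chain[OF assms all] f_def by auto
  then have "finite (range f)" using finV finite_subset by blast
  ultimately have "finite (UNIV :: nat set)" using finite_imageD by blast
  then show False by simp
qed

lemma end_unique: assumes "\<forall>j<i. lstep V r p c1 R ((c1^^j) v)" "\<not> lstep V r p c1 R ((c1^^i) v)"
  "\<forall>j<i'. lstep V r p c1 R ((c1^^j) v)" "\<not> lstep V r p c1 R ((c1^^i') v)" shows "i = i'"
proof (rule ccontr)
  assume "i \<noteq> i'"
  then have "i < i' \<or> i' < i" by arith
  then show False using assms by blast
qed

lemma lend_eq: assumes "v \<in> V" "\<forall>j<i. lstep V r p c1 R ((c1^^j) v)" "\<not> lstep V r p c1 R ((c1^^i) v)"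
  shows "lend V r p c1 R v = (c1^^i) v"
  unfolding lend_def
proof (rule the_equality)
  show "onP V r p c1 R v ((c1^^i) v) \<and> \<not> lstep V r p c1 R ((c1^^i) v)"
    unfolding onP_def using assms by blast
next
  fix w assume "onP V r p c1 R v w \<and> \<not> lstep V r p c1 R w"
  then obtain i' where i': "w = (c1^^i') v" "\<forall>j<i'. lstep V r p c1 R ((c1^^j) v)" "\<not> lstep V r p c1 R w"
    unfolding onP_def by blast
  then have "i = i'" using end_unique[OF assms(2,3)] by blast
  then show "w = (c1^^i) v" using i' by simp
qed

lemma lend_props: assumes "v \<in> V"
  shows "\<exists>i. lend V r p c1 R v = (c1^^i) v \<and> (\<forall>j<i. lstep V r p c1 R ((c1^^j) v)) \<and> \<not> lstep V r p c1 R ((c1^^i) v)"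
proof -
  obtain i where "\<forall>j<i. lstep V r p c1 R ((c1^^j) v)" "\<not> lstep V r p c1 R ((c1^^i) v)"
    using path_end_ex[OF assms] by blast
  then show ?thesis using lend_eq[OF assms] by blast
qed

lemma bfirst_Some: assumes "v \<in> V" "bfirst V r p c1 R d v = Some b"
  shows "\<exists>i. b = (c1^^i) v \<and> (\<forall>j<i. lstep V r p c1 R ((c1^^j) v)) \<and> balanced V r p c1 R d b
     \<and> (\<forall>j<i. \<not> balanced V r p c1 R d ((c1^^j) v))"
proof -
  have ex: "\<exists>w. onP V r p c1 R v w \<and> balanced V r p c1 R d w"
    using assms(2) unfolding bfirst_def by (auto split: if_splits)
  define P where "P = (\<lambda>i. (\<forall>j<i. lstep V r p c1 R ((c1^^j) v)) \<and> balanced V r p c1 R d ((c1^^i) v))"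
  have exP: "\<exists>i. P i" using ex unfolding P_def onP_def by blast
  define i0 where "i0 = (LEAST i. P i)"
  have Pi0: "P i0" using exP unfolding i0_def by (rule LeastI_ex)
  have mini: "\<And>i. P i \<Longrightarrow> i0 \<le> i" unfolding i0_def by (rule Least_le)
  define b0 where "b0 = (c1^^i0) v"
  have b0prop: "onP V r p c1 R v b0 \<and> balanced V r p c1 R d b0 \<and>
      (\<forall>w'. onP V r p c1 R v w' \<and> balanced V r p c1 R d w' \<longrightarrow> anc p b0 w')"
  proof (intro conjI allI impI)
    show "onP V r p c1 R v b0" unfolding onP_def b0_def using Pi0 P_def by blast
    show "balanced V r p c1 R d b0" using Pi0 P_def b0_def by blast
    fix w' assume "onP V r p c1 R v w' \<and> balanced V r p c1 R d w'"
    then obtain i' where i': "w' = (c1^^i') v" "\<forall>j<i'. lstep V r p c1 R ((c1^^j) v)"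
       "balanced V r p c1 R d w'" unfolding onP_def by blast
    then have "P i'" unfolding P_def by blast
    then show "anc p b0 w'" using chain_anc[OF assms(1) i'(2) mini] i'(1) b0_def by blast
  qed
  have "(THE w. onP V r p c1 R v w \<and> balanced V r p c1 R d w \<and>
                 (\<forall>w'. onP V r p c1 R v w' \<and> balanced V r p c1 R d w' \<longrightarrow> anc p w w')) = b0"
  proof (rule the_equality)
    fix w assume h: "onP V r p c1 R v w \<and> balanced V r p c1 R d w \<and>
                 (\<forall>w'. onP V r p c1 R v w' \<and> balanced V r p c1 R d w' \<longrightarrow> anc p w w')"
    then have "anc p w b0" using b0prop by blast
    moreover have "anc p b0 w" using b0prop h by blast
    moreover have "b0 \<in> V" using chain[OF assms(1)] Pi0 P_def b0_def by blast
    ultimately show "w = b0" using anc_antisym by blast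
  qed (use b0prop in blast)
  then have bb: "b = b0" using assms(2) ex unfolding bfirst_def by simp
  have "\<forall>j<i0. \<not> balanced V r p c1 R d ((c1^^j) v)"
  proof (intro allI impI notI)
    fix j assume j: "j < i0" "balanced V r p c1 R d ((c1^^j) v)"
    then have "P j" using Pi0 unfolding P_def by auto
    then show False using mini j by fastforce
  qed
  then show ?thesis using bb b0_def Pi0 P_def by blast
qed

lemma bfirst_None: assumes "bfirst V r p c1 R d v = None" "\<forall>j<i. lstep V r p c1 R ((c1^^j) v)"
  shows "\<not> balanced V r p c1 R d ((c1^^i) v)"
  using assms unfolding bfirst_def onP_def by (auto split: if_splits)

abbreviation F where "F R \<equiv> canonical V r p c1 k R"
abbreviation C where "C R \<equiv> Cset V r p c1 k R"
abbreviation small where "small R \<equiv> real k \<ge> real (card R) / 2 - 1"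
abbreviation dd where "dd R \<equiv> real (card R) / real k"

lemma F_top: "F V" by (rule canonical.can_top)
lemma F_rec: "F R \<Longrightarrow> is_component V p (R - C R) S \<Longrightarrow> F S" by (rule canonical.can_rec)

lemma F_subtree: "F R \<Longrightarrow> st R"
proof (induction rule: canonical.induct)
  case can_top then show ?case by (rule subtree_V)
next
  case (can_rec R S) then show ?case using comp_D by blast
qed

lemma F_sub: "F R \<Longrightarrow> R \<subseteq> V"
  using F_subtree subtree_D(1) by blast

lemma F_fin: "F R \<Longrightarrow> finite R"
  using F_sub finV finite_subset by blast

lemma inCV_sub: "inCV V r p c1 Q d x \<Longrightarrow> st Q \<Longrightarrow> x \<in> Q"
proof (induction rule: inCV.induct)
  case (cv_here R d b)
  have t: "rt p R \<in> R" "rt p R \<in> V" using subtree_D[OF cv_here.prems] by auto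
  obtain i where "b = (c1^^i) (rt p R)" "\<forall>j<i. lstep V r p c1 R ((c1^^j) (rt p R))"
    using bfirst_Some[OF t(2) cv_here.hyps] by blast
  then show ?case using chain_R[OF t(2) t(1)] by blast
next
  case (cv_rec R d b w x)
  have "st (subR p R w)" using subtree_subR cv_rec by blast
  then have "x \<in> subR p R w" using cv_rec by blast
  then show ?case unfolding subR_def by blast
qed

lemma lend_in: assumes "st R" shows "lend V r p c1 R (rt p R) \<in> R"
proof -
  have t: "rt p R \<in> R" "rt p R \<in> V" using subtree_D[OF assms] by auto
  obtain i where "lend V r p c1 R (rt p R) = (c1^^i) (rt p R)" "\<forall>j<i. lstep V r p c1 R ((c1^^j) (rt p R))"
    using lend_props[OF t(2)] by blast
  then show ?thesis using chain_R[OF t(2) t(1)] by simp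
qed

lemma C_cases: "C R = (if small R then R else {x. inCV V r p c1 R (dd R) x} \<union> {lend V r p c1 R (rt p R), rt p R})"
  unfolding Cset_def by simp

lemma C_sub: assumes "F R" shows "C R \<subseteq> R"
proof -
  have st: "st R" using F_subtree assms by blast
  show ?thesis unfolding C_cases using inCV_sub[OF _ st] lend_in[OF st] subtree_D(3)[OF st] by auto
qed

lemma rt_C: assumes "F R" shows "rt p R \<in> C R"
  unfolding C_cases using subtree_D(3)[OF F_subtree[OF assms]] by auto

lemma lend_C: assumes "F R" shows "lend V r p c1 R (rt p R) \<in> C R"
  unfolding C_cases using lend_in[OF F_subtree[OF assms]] by auto

lemma comp_nonempty: "is_component V p A S \<Longrightarrow> S \<noteq> {}"
  using comp_D subtree_D(2) by blast

lemma comp_psub: assumes "F R" "is_component V p (R - C R) S" shows "S \<subset> R"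
proof -
  have "S \<subseteq> R - C R" using comp_D assms by blast
  moreover have "rt p R \<in> R" "rt p R \<in> C R" using rt_C assms subtree_D(3)[OF F_subtree[OF assms(1)]] by auto
  ultimately show ?thesis by blast
qed

inductive cat :: "nat \<Rightarrow> 'a set \<Rightarrow> bool" where
  cat0: "cat 0 V"
| catS: "cat n R \<Longrightarrow> is_component V p (R - C R) S \<Longrightarrow> cat (Suc n) S"

lemma F_cat: "F R \<Longrightarrow> \<exists>n. cat n R"
proof (induction rule: canonical.induct)
  case can_top then show ?case using cat0 by blast
next
  case (can_rec R S) then show ?case using catS by blast
qed

lemma cat_same: "cat n R \<Longrightarrow> cat n R' \<Longrightarrow> R = R' \<or> R \<inter> R' = {}"
proof (induction arbitrary: R' rule: cat.induct)
  case cat0 then show ?case by (cases rule: cat.cases) auto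
next
  case (catS n R0 S)
  from catS.prems obtain R0' where R0': "cat n R0'" "is_component V p (R0' - C R0') R'"
    by (cases rule: cat.cases) auto
  have "R0 = R0' \<or> R0 \<inter> R0' = {}" using catS.IH R0'(1) by blast
  then show ?case
  proof
    assume "R0 = R0'"
    then show ?thesis using comp_unique[OF catS.hyps(2)] R0'(2) by blast
  next
    assume "R0 \<inter> R0' = {}"
    then show ?thesis using comp_D[OF catS.hyps(2)] comp_D[OF R0'(2)] by blast
  qed
qed

lemma cat_anc: "cat b R \<Longrightarrow> a \<le> b \<Longrightarrow> \<exists>A. cat a A \<and> R \<subseteq> A"
proof (induction arbitrary: a rule: cat.induct)
  case cat0 then show ?case using cat.cat0 by blast
next
  case (catS n R0 S)
  show ?case
  proof (cases "a = Suc n")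
    case True then show ?thesis using cat.catS catS.hyps by blast
  next
    case False
    then have "a \<le> n" using catS.prems by simp
    then obtain A where "cat a A" "R0 \<subseteq> A" using catS.IH by blast
    then show ?thesis using comp_D[OF catS.hyps(2)] by blast
  qed
qed

lemma cat_anc2: assumes "cat b R" "a < b"
  shows "\<exists>A0 A1. cat a A0 \<and> is_component V p (A0 - C A0) A1 \<and> R \<subseteq> A1"
proof -
  have "Suc a \<le> b" using assms(2) by simp
  then obtain A1 where A1: "cat (Suc a) A1" "R \<subseteq> A1" using cat_anc[OF assms(1)] by blast
  from A1(1) obtain A0 where "cat a A0" "is_component V p (A0 - C A0) A1"
    by (cases rule: cat.cases) auto
  then show ?thesis using A1 by blast
qed

lemma lam: assumes "F R" "F R'" shows "(R \<subseteq> R' \<or> R' \<subseteq> R \<or> R \<inter> R' = {}) \<and>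
   (R \<subset> R' \<longrightarrow> (\<exists>S. is_component V p (R' - C R') S \<and> R \<subseteq> S))"
proof -
  obtain a where a: "cat a R" using F_cat assms by blast
  obtain b where b: "cat b R'" using F_cat assms by blast
  have Rne: "R \<noteq> {}" using F_subtree[OF assms(1)] subtree_D(2) by blast
  have R'ne: "R' \<noteq> {}" using F_subtree[OF assms(2)] subtree_D(2) by blast
  have part1: "R \<subseteq> R' \<or> R' \<subseteq> R \<or> R \<inter> R' = {}"
  proof (cases "a \<le> b")
    case True
    then obtain A where "cat a A" "R' \<subseteq> A" using cat_anc b by blast
    then show ?thesis using cat_same[OF a] by blast
  next
    case False
    then have "b \<le> a" by simp
    then obtain A where "cat b A" "R \<subseteq> A" using cat_anc[OF a] by blast
    then show ?thesis using cat_same[OF b] by blast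
  qed
  have part2: "R \<subset> R' \<Longrightarrow> \<exists>S. is_component V p (R' - C R') S \<and> R \<subseteq> S"
  proof -
    assume sub: "R \<subset> R'"
    show ?thesis
    proof (cases "b < a")
      case True
      then obtain A0 A1 where A: "cat b A0" "is_component V p (A0 - C A0) A1" "R \<subseteq> A1"
        using cat_anc2[OF a] by blast
      have "A1 \<subseteq> A0" using comp_D[OF A(2)] by blast
      have "R' = A0 \<or> R' \<inter> A0 = {}" using cat_same[OF b A(1)] .
      then have "A0 = R'" using \<open>A1 \<subseteq> A0\<close> A(3) sub Rne by blast
      then show ?thesis using A by blast
    next
      case False
      then have "a \<le> b" by simp
      then obtain A where A: "cat a A" "R' \<subseteq> A" using cat_anc[OF b] by blast
      have "A = R \<or> A \<inter> R = {}" using cat_same[OF A(1) a] .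
      then have "A = R" using A(2) sub Rne by blast
      then show ?thesis using A sub by blast
    qed
  qed
  show ?thesis using part1 part2 by blast
qed

definition TT :: "'a \<Rightarrow> 'a set" where "TT u = (THE R. F R \<and> u \<in> C R)"

lemma TT_unique: assumes "F R" "F R'" "u \<in> C R" "u \<in> C R'" shows "R = R'"
proof (rule ccontr)
  assume ne: "R \<noteq> R'"
  have uR: "u \<in> R" "u \<in> R'" using C_sub assms by blast+
  have L1: "(R \<subseteq> R' \<or> R' \<subseteq> R \<or> R \<inter> R' = {}) \<and> (R \<subset> R' \<longrightarrow> (\<exists>S. is_component V p (R' - C R') S \<and> R \<subseteq> S))"
    using lam assms by blast
  have L2: "R' \<subset> R \<longrightarrow> (\<exists>S. is_component V p (R - C R) S \<and> R' \<subseteq> S)"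
    using lam assms by blast
  have "R \<subset> R' \<or> R' \<subset> R" using L1 ne uR by blast
  then show False
  proof
    assume "R \<subset> R'"
    then obtain S where "is_component V p (R' - C R') S" "R \<subseteq> S" using L1 by blast
    then show False using comp_D uR assms by blast
  next
    assume "R' \<subset> R"
    then obtain S where "is_component V p (R - C R) S" "R' \<subseteq> S" using L2 by blast
    then show False using comp_D uR assms by blast
  qed
qed

lemma TT_ex: assumes "u \<in> V" shows "\<exists>R. F R \<and> u \<in> C R"
proof -
  define P where "P = (\<lambda>R. F R \<and> u \<in> R)"
  have P0: "P V" unfolding P_def using assms F_top by blast
  obtain R where R1: "P R" and R2: "\<forall>y. P y \<longrightarrow> card R \<le> card y"
    using ex_has_least_nat[of P V card, OF P0] by (elim exE conjE)
  have FR: "F R" "u \<in> R" using R1 P_def by auto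
  show ?thesis
  proof (cases "u \<in> C R")
    case True then show ?thesis using FR by blast
  next
    case False
    have "R - C R \<subseteq> V" using F_sub FR by blast
    then obtain S where S: "is_component V p (R - C R) S" "u \<in> S" using comp_exists False FR by blast
    have FS: "F S" using F_rec FR S by blast
    have "S \<subset> R" using comp_psub FR S by blast
    then have "card S < card R" using F_fin[OF FR(1)] psubset_card_mono by blast
    moreover have "P S" unfolding P_def using FS S by blast
    ultimately show ?thesis using R2 by fastforce
  qed
qed

lemma TT: assumes "u \<in> V" shows "F (TT u)" "u \<in> C (TT u)"
proof -
  obtain R where R: "F R" "u \<in> C R" using TT_ex assms by blast
  have "TT u = R" unfolding TT_def by (rule the_equality) (use R TT_unique in blast)+
  then show "F (TT u)" "u \<in> C (TT u)" using R by auto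
qed

lemma TT_eq: "F R \<Longrightarrow> u \<in> C R \<Longrightarrow> TT u = R"
  using TT TT_unique C_sub F_sub by blast

lemma CT_eq: "CT V r p c1 k u = C (TT u)"
  unfolding CT_def TT_def by simp

lemma TT_sub: assumes "F K" "u \<in> K" shows "TT u \<subseteq> K"
proof -
  have uV: "u \<in> V" using F_sub assms by blast
  have FT: "F (TT u)" and uC: "u \<in> C (TT u)" using TT uV by auto
  have uT: "u \<in> TT u" using C_sub FT uC by blast
  have L: "(TT u \<subseteq> K \<or> K \<subseteq> TT u \<or> TT u \<inter> K = {}) \<and>
     (K \<subset> TT u \<longrightarrow> (\<exists>S. is_component V p (TT u - C (TT u)) S \<and> K \<subseteq> S))"
    using lam[OF FT assms(1)] lam[OF assms(1) FT] by blast
  show ?thesis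
  proof (rule ccontr)
    assume "\<not> TT u \<subseteq> K"
    then have "K \<subset> TT u" using L uT assms(2) by blast
    then obtain S where "is_component V p (TT u - C (TT u)) S" "K \<subseteq> S" using L by blast
    then show False using comp_D uC assms(2) by blast
  qed
qed

definition lev :: "'a set \<Rightarrow> nat" where "lev R = card {R'. F R' \<and> R \<subset> R'}"

lemma Ffam_fin: "finite {R'. F R' \<and> P R'}"
proof -
  have "{R'. F R' \<and> P R'} \<subseteq> Pow V" using F_sub by blast
  moreover have "finite (Pow V)" using finV by simp
  ultimately show ?thesis by (rule finite_subset)
qed

lemma lev_child: assumes "F R" "is_component V p (R - C R) S" shows "lev S = Suc (lev R)"
proof -
  have SR: "S \<subset> R" using comp_psub assms by blast
  have Sne: "S \<noteq> {}" using comp_nonempty assms by blast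
  have eq: "{R'. F R' \<and> S \<subset> R'} = insert R {R'. F R' \<and> R \<subset> R'}"
  proof (intro equalityI subsetI)
    fix R' assume h: "R' \<in> {R'. F R' \<and> S \<subset> R'}"
    then have FR': "F R'" "S \<subset> R'" by auto
    have L: "(R' \<subseteq> R \<or> R \<subseteq> R' \<or> R' \<inter> R = {}) \<and>
      (R' \<subset> R \<longrightarrow> (\<exists>S. is_component V p (R - C R) S \<and> R' \<subseteq> S))" using lam FR' assms by blast
    show "R' \<in> insert R {R'. F R' \<and> R \<subset> R'}"
    proof (cases "R' \<subset> R")
      case True
      then obtain S'' where S'': "is_component V p (R - C R) S''" "R' \<subseteq> S''" using L by blast
      then have "S = S''" using comp_unique[OF assms(2) S''(1)] FR' Sne by blast
      then show ?thesis using S'' FR' by blast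
    next
      case False
      then show ?thesis using L FR' SR Sne by blast
    qed
  next
    fix R' assume "R' \<in> insert R {R'. F R' \<and> R \<subset> R'}"
    then show "R' \<in> {R'. F R' \<and> S \<subset> R'}" using SR assms by blast
  qed
  have "R \<notin> {R'. F R' \<and> R \<subset> R'}" by blast
  then have "card (insert R {R'. F R' \<and> R \<subset> R'}) = Suc (card {R'. F R' \<and> R \<subset> R'})"
    using Ffam_fin[of "\<lambda>R'. R \<subset> R'"] by simp
  then show ?thesis unfolding lev_def eq by simp
qed

lemma lev_mono: assumes "F K" "R \<subseteq> K" shows "lev K \<le> lev R"
  unfolding lev_def
  by (rule card_mono) (use assms Ffam_fin in auto)

lemma lev_V: "lev V = 0"
proof -
  have "{R'. F R' \<and> V \<subset> R'} = {}" using F_sub by blast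
  then show ?thesis unfolding lev_def by (simp only: card.empty)
qed

lemma subR_rt: assumes "st Q" shows "subR p Q (rt p Q) = Q"
  unfolding subR_def using subtree_D(4)[OF assms] by blast

lemma cv_size: "st Q \<Longrightarrow> st S \<Longrightarrow> S \<subseteq> Q \<Longrightarrow> (\<forall>x\<in>S. \<not> inCV V r p c1 Q d x) \<Longrightarrow> real (card S) < d"
proof (induction "card Q" arbitrary: Q S rule: less_induct)
  case less
  have QV: "Q \<subseteq> V" using subtree_D(1)[OF less.prems(1)] .
  have fQ: "finite Q" using finite_subset[OF QV finV] .
  have fS: "finite S" using finite_subset[OF less.prems(3) fQ] .
  have t: "rt p Q \<in> Q" "rt p Q \<in> V" using subtree_D(3)[OF less.prems(1)] QV by auto
  have Sne: "S \<noteq> {}" using subtree_D(2)[OF less.prems(2)] .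
  have cSQ: "card S \<le> card Q" using card_mono[OF fQ less.prems(3)] .
  show ?case
  proof (cases "bfirst V r p c1 Q d (rt p Q)")
    case None
    obtain i where i: "lend V r p c1 Q (rt p Q) = (c1^^i) (rt p Q)" "\<forall>j<i. lstep V r p c1 Q ((c1^^j) (rt p Q))"
       "\<not> lstep V r p c1 Q ((c1^^i) (rt p Q))" using lend_props[OF t(2)] by blast
    have "\<not> balanced V r p c1 Q d ((c1^^i) (rt p Q))" using bfirst_None[OF None i(2)] .
    moreover have "csize V r p c1 Q ((c1^^i) (rt p Q)) = 0" unfolding csize_def using i(3) by simp
    ultimately have "real (card Q) < d" unfolding balanced_def by simp
    then show ?thesis using cSQ by linarith
  next
    case (Some b)
    obtain i where i: "b = (c1^^i) (rt p Q)" "\<forall>j<i. lstep V r p c1 Q ((c1^^j) (rt p Q))"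
      "balanced V r p c1 Q d b" "\<forall>j<i. \<not> balanced V r p c1 Q d ((c1^^j) (rt p Q))"
      using bfirst_Some[OF t(2) Some] by blast
    have bQ: "b \<in> Q" using chain_R[OF t(2) t(1) i(2)] i(1) by simp
    have bV: "b \<in> V" using bQ QV by blast
    have bcv: "inCV V r p c1 Q d b" using inCV.cv_here[OF Some] .
    have bS: "b \<notin> S" using bcv less.prems(4) by blast
    show ?thesis
    proof (cases "S \<inter> subR p Q b = {}")
      case True
      show ?thesis
      proof (cases i)
        case 0
        then have "subR p Q b = Q" using i(1) subR_rt[OF less.prems(1)] by simp
        then show ?thesis using True less.prems(3) Sne by blast
      next
        case (Suc m)
        define a where "a = (c1^^m) (rt p Q)"
        have la: "lstep V r p c1 Q a" using i(2) Suc a_def by simp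
        have ca: "c1 a = b" using i(1) Suc a_def by simp
        have "\<not> balanced V r p c1 Q d a" using i(4) Suc a_def by simp
        then have "real (card Q) - d < real (card (subR p Q b))"
          unfolding balanced_def csize_def using la ca by simp
        moreover have "S \<union> subR p Q b \<subseteq> Q" using less.prems(3) unfolding subR_def by blast
        then have "card (S \<union> subR p Q b) \<le> card Q" using card_mono[OF fQ] by blast
        moreover have "card (S \<union> subR p Q b) = card S + card (subR p Q b)"
        proof (rule card_Un_disjoint)
          show "finite (subR p Q b)" using fQ unfolding subR_def by simp
        qed (use fS True in auto)
        ultimately show ?thesis by linarith
      qed
    next
      case False
      then obtain x where x: "x \<in> S" "x \<in> subR p Q b" by blast
      define s where "s = rt p S"
      have sS: "s \<in> S" "\<And>y. y \<in> S \<Longrightarrow> anc p s y"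
        using subtree_D(3,4)[OF less.prems(2)] unfolding s_def by blast+
      have bx: "anc p b x" using x(2) unfolding subR_def by simp
      have "anc p s b \<or> anc p b s" using anc_lin[OF sS(2)[OF x(1)] bx] .
      moreover have "\<not> anc p s b"
      proof
        assume "anc p s b"
        then have "b \<in> S" using convex[OF less.prems(2) sS(1) x(1)] bx by blast
        then show False using bS by blast
      qed
      ultimately have bs: "anc p b s" by blast
      have sV: "s \<in> V" using sS(1) less.prems(3) QV by blast
      have "b \<noteq> s" using bS sS(1) by blast
      then obtain w where w: "w \<in> children V r p b" "anc p w s" using anc_strict_child[OF bs _ sV] by blast
      have sQ: "s \<in> Q" using sS(1) less.prems(3) by blast
      have wQ: "w \<in> Q" using convex[OF less.prems(1) bQ sQ anc_child[OF w(1)] w(2)] .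
      define Q' where "Q' = subR p Q w"
      have stQ': "st Q'" "rt p Q' = w" using subtree_subR[OF less.prems(1) wQ] Q'_def by auto
      have SQ': "S \<subseteq> Q'"
      proof
        fix y assume y: "y \<in> S"
        then have "anc p w y" using anc_trans[OF w(2) sS(2)[OF y]] by simp
        then show "y \<in> Q'" using y less.prems(3) Q'_def unfolding subR_def by blast
      qed
      have "b \<notin> Q'" using not_anc_child[OF w(1)] Q'_def unfolding subR_def by blast
      then have "Q' \<subset> Q" using bQ Q'_def unfolding subR_def by blast
      then have cQ': "card Q' < card Q" using psubset_card_mono[OF fQ] by blast
      have "\<forall>y\<in>S. \<not> inCV V r p c1 Q' d y"
      proof (intro ballI notI)
        fix y assume "y \<in> S" "inCV V r p c1 Q' d y"
        then have "inCV V r p c1 Q d y" using inCV.cv_rec[OF Some w(1) wQ] Q'_def by blast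
        then show False using less.prems(4) \<open>y \<in> S\<close> by blast
      qed
      then show ?thesis using less.hyps[OF cQ' stQ'(1) less.prems(2) SQ'] by blast
    qed
  qed
qed

lemma comp_small: assumes "F R" "is_component V p (R - C R) S" shows "4 * card S < card R"
proof -
  have nsm: "\<not> small R"
  proof
    assume "small R"
    then have "C R = R" unfolding C_cases by simp
    then show False using comp_nonempty[OF assms(2)] comp_D[OF assms(2)] by blast
  qed
  have SR: "S \<subseteq> R" using comp_D[OF assms(2)] by blast
  have "\<forall>x\<in>S. \<not> inCV V r p c1 R (dd R) x"
    using comp_D[OF assms(2)] nsm unfolding C_cases by auto
  then have lt: "real (card S) < real (card R) / real k"
    using cv_size[OF F_subtree[OF assms(1)] conjunct1[OF comp_D[OF assms(2)]] SR] by blast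
  have kpos: "real k > 0" using k4 by simp
  have "real (card S) * real k < real (card R)" using lt kpos by (simp add: field_simps)
  moreover have "4 * real (card S) \<le> real (card S) * real k"
  proof -
    have "(4::real) \<le> real k" using k4 by simp
    then have "real (card S) * 4 \<le> real (card S) * real k" by (rule mult_left_mono) simp
    then show ?thesis by simp
  qed
  ultimately have "4 * real (card S) < real (card R)" by linarith
  then show ?thesis by linarith
qed

lemma lev_size: "F R \<Longrightarrow> card R * 2 ^ lev R \<le> card V"
proof (induction rule: canonical.induct)
  case can_top then show ?case using lev_V by simp
next
  case (can_rec R S)
  have "lev S = Suc (lev R)" using lev_child can_rec by blast
  moreover have "2 * card S \<le> card R" using comp_small can_rec by fastforce
  ultimately have "card S * 2 ^ lev S \<le> card R * 2 ^ lev R"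
    by (simp add: mult.assoc mult.commute mult.left_commute)
  then show ?case using can_rec.IH by linarith
qed

lemma lev_bound: assumes "F R" shows "2 ^ lev R \<le> card V"
proof -
  have "R \<noteq> {}" using F_subtree[OF assms] subtree_D(2) by blast
  then have "card R \<ge> 1" using F_fin[OF assms] by (simp add: Suc_leI card_gt_0_iff)
  then have "2 ^ lev R \<le> card R * 2 ^ lev R" by simp
  then show ?thesis using lev_size[OF assms] by linarith
qed

lemma lstep_subR: "lstep V r p c1 (subR p R w) y \<Longrightarrow> lstep V r p c1 R y"
  unfolding lstep_def subR_def by blast

lemma inCV_chain: "inCV V r p c1 Q d x \<Longrightarrow> st Q \<Longrightarrow> \<exists>t0 i. x = (c1^^i) t0 \<and>
   (\<forall>j<i. lstep V r p c1 Q ((c1^^j) t0)) \<and> t0 \<in> Q \<and> (t0 = rt p Q \<or> inCV V r p c1 Q d (p t0))"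
proof (induction rule: inCV.induct)
  case (cv_here R d b)
  have t: "rt p R \<in> R" "rt p R \<in> V" using subtree_D[OF cv_here.prems] by auto
  obtain i where "b = (c1^^i) (rt p R)" "\<forall>j<i. lstep V r p c1 R ((c1^^j) (rt p R))"
    using bfirst_Some[OF t(2) cv_here.hyps] by blast
  then show ?case using t by blast
next
  case (cv_rec R d b w x)
  have st': "st (subR p R w)" "rt p (subR p R w) = w" using subtree_subR cv_rec by blast+
  obtain t0 i where ti: "x = (c1^^i) t0" "\<forall>j<i. lstep V r p c1 (subR p R w) ((c1^^j) t0)"
    "t0 \<in> subR p R w" "t0 = w \<or> inCV V r p c1 (subR p R w) d (p t0)"
    using cv_rec.IH[OF st'(1)] st'(2) by auto
  have l: "\<forall>j<i. lstep V r p c1 R ((c1^^j) t0)" using ti(2) lstep_subR by blast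
  have t0R: "t0 \<in> R" using ti(3) unfolding subR_def by blast
  have "inCV V r p c1 R d (p t0)"
    using ti(4)
  proof
    assume "t0 = w"
    then have "p t0 = b" using child_facts[OF cv_rec.hyps(2)] by simp
    then show ?thesis using inCV.cv_here[OF cv_rec.hyps(1)] by simp
  next
    assume "inCV V r p c1 (subR p R w) d (p t0)"
    then show ?thesis using inCV.cv_rec[OF cv_rec.hyps(1,2,3)] by blast
  qed
  then show ?case using ti(1) l t0R by blast
qed

lemma chain_between: "t0 \<in> V \<Longrightarrow> (\<forall>j<n. lstep V r p c1 R ((c1^^j) t0)) \<Longrightarrow> anc p t0 y \<Longrightarrow>
   anc p y ((c1^^n) t0) \<Longrightarrow> \<exists>j\<le>n. y = (c1^^j) t0"
proof (induction n arbitrary: y)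
  case 0
  then have "y = t0" using anc_antisym by auto
  then show ?case by auto
next
  case (Suc n)
  define z where "z = (c1^^n) t0"
  have zV: "z \<in> V" using chain[OF Suc.prems(1), of n R] Suc.prems(2) z_def by auto
  have "lstep V r p c1 R z" using Suc.prems(2) z_def by simp
  then have cz: "c1 z \<in> children V r p z" using lstep_child zV by blast
  have e: "(c1^^Suc n) t0 = c1 z" using z_def by simp
  show ?case
  proof (cases "y = c1 z")
    case True then show ?thesis using e by (intro exI[of _ "Suc n"]) simp
  next
    case False
    then have "anc p y (p (c1 z))" using anc_p Suc.prems(4) e by metis
    then have "anc p y z" using child_facts[OF cz] by simp
    then obtain j where "j \<le> n" "y = (c1^^j) t0" using Suc.IH[OF Suc.prems(1) _ Suc.prems(3)] Suc.prems(2) z_def by auto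
    then show ?thesis by (intro exI[of _ j]) simp
  qed
qed

lemma nsmall_comp: assumes "is_component V p (R - C R) S" shows "\<not> small R"
proof
  assume "small R"
  then have "C R = R" unfolding C_cases by simp
  then show False using comp_nonempty[OF assms] comp_D[OF assms] by blast
qed

lemma boundary_inner: assumes FR: "F R" and S: "is_component V p (R - C R) S" and wS: "w \<in> S"
  and cw: "c \<in> children V r p w" and cC: "c \<in> C R"
  shows "w \<in> C S"
proof -
  have nsm: "\<not> small R" using nsmall_comp[OF S] .
  have stR: "st R" using F_subtree[OF FR] .
  have SRC: "S \<subseteq> R - C R" using comp_D[OF S] by blast
  have stS: "st S" using comp_D[OF S] by blast
  have FS: "F S" using F_rec[OF FR S] .
  have wR: "w \<in> R" using wS SRC by blast
  have wC: "w \<notin> C R" using wS SRC by blast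
  have pc: "p c = w" using child_facts[OF cw] by simp
  have rtR: "rt p R \<in> V" "rt p R \<in> R" "rt p R \<in> C R" using subtree_D(1,3)[OF stR] rt_C[OF FR] by auto
  have crt: "c \<noteq> rt p R"
  proof
    assume "c = rt p R"
    then have "anc p c w" using subtree_D(4)[OF stR wR] by simp
    then show False using not_anc_child[OF cw] by simp
  qed
  have "\<exists>t0 i. c = (c1^^i) t0 \<and> (\<forall>j<i. lstep V r p c1 R ((c1^^j) t0)) \<and> t0 \<in> R \<and>
          (t0 = rt p R \<or> p t0 \<in> C R)"
  proof -
    have "c \<in> {x. inCV V r p c1 R (dd R) x} \<or> c = lend V r p c1 R (rt p R)"
      using cC crt nsm unfolding C_cases by auto
    then show ?thesis
    proof
      assume "c \<in> {x. inCV V r p c1 R (dd R) x}"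
      then obtain t0 i where ti: "c = (c1^^i) t0" "\<forall>j<i. lstep V r p c1 R ((c1^^j) t0)" "t0 \<in> R"
        "t0 = rt p R \<or> inCV V r p c1 R (dd R) (p t0)" using inCV_chain[OF _ stR] by blast
      have "t0 = rt p R \<or> p t0 \<in> C R" using ti(4) nsm unfolding C_cases by auto
      then show ?thesis using ti by blast
    next
      assume "c = lend V r p c1 R (rt p R)"
      then show ?thesis using lend_props[OF rtR(1), of R] rtR by blast
    qed
  qed
  then obtain t0 i where ti: "c = (c1^^i) t0" "\<forall>j<i. lstep V r p c1 R ((c1^^j) t0)" "t0 \<in> R"
          "t0 = rt p R \<or> p t0 \<in> C R" by blast
  have t0V: "t0 \<in> V" using ti(3) subtree_D(1)[OF stR] by blast
  obtain m where im: "i = Suc m"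
  proof (cases i)
    case 0
    then have "c = t0" using ti(1) by simp
    then have "p t0 \<in> C R" using ti(4) crt by blast
    then show ?thesis using wC pc \<open>c = t0\<close> by simp
  qed
  define z where "z = (c1^^m) t0"
  have zV: "z \<in> V" using chain[OF t0V, of m R] ti(2) im z_def by auto
  have lz: "lstep V r p c1 R z" using ti(2) im z_def by simp
  have cz: "c = c1 z" using ti(1) im z_def by simp
  have "c \<in> children V r p z" using lstep_child[OF zV lz] cz by simp
  then have wz: "w = z" using child_facts pc by metis
  define s where "s = rt p S"
  have sS: "s \<in> S" "anc p s w" using subtree_D(3,4)[OF stS] wS unfolding s_def by blast+
  have lm: "\<forall>j<m. lstep V r p c1 R ((c1^^j) t0)" using ti(2) im by simp
  have t0w: "anc p t0 w" using chain[OF t0V lm] wz z_def by simp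
  have t0s: "anc p t0 s"
  proof (rule ccontr)
    assume na: "\<not> anc p t0 s"
    then have st0: "anc p s t0" "s \<noteq> t0" using anc_lin[OF sS(2) t0w] by auto
    have t0S: "t0 \<in> S" using convex[OF stS sS(1) wS st0(1) t0w] .
    show False using ti(4)
    proof
      assume "t0 = rt p R" then show False using t0S SRC rtR(3) by blast
    next
      assume pt: "p t0 \<in> C R"
      have "anc p s (p t0)" using anc_p[OF st0] .
      then have "p t0 \<in> S" using convex[OF stS sS(1) t0S _ anc_pself] by blast
      then show False using pt SRC by blast
    qed
  qed
  obtain j where j: "j \<le> m" "s = (c1^^j) t0"
    using chain_between[OF t0V lm t0s] sS(2) wz z_def by blast
  have sV: "s \<in> V" using sS(1) SRC subtree_D(1)[OF stR] by blast
  have eqfun: "\<And>q. (c1^^q) s = (c1^^(q+j)) t0" using j(2) by (simp add: funpow_add)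
  have "lend V r p c1 S s = (c1^^(m-j)) s"
  proof (rule lend_eq[OF sV])
    show "\<forall>q<m-j. lstep V r p c1 S ((c1^^q) s)"
    proof (intro allI impI)
      fix q assume q: "q < m - j"
      have lq: "lstep V r p c1 R ((c1^^(q+j)) t0)" using lm q by simp
      have "(c1^^(Suc (q+j))) t0 = c1 ((c1^^(q+j)) t0)" by simp
      have lq': "\<forall>j'<Suc (q+j). lstep V r p c1 R ((c1^^j') t0)" using lm q by auto
      have a1: "anc p s ((c1^^(Suc (q+j))) t0)" using chain_anc[OF t0V lq', of j] j(2) by simp
      have "Suc (q+j) \<le> m" using q by simp
      then have a2: "anc p ((c1^^(Suc (q+j))) t0) w" using chain_anc[OF t0V lm, of "Suc (q+j)"] wz z_def by simp
      have "(c1^^(Suc (q+j))) t0 \<in> S" using convex[OF stS sS(1) wS a1 a2] .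
      then show "lstep V r p c1 S ((c1^^q) s)" using lq eqfun unfolding lstep_def by simp
    qed
    have "(c1^^(m-j)) s = w" using eqfun[of "m-j"] j(1) wz z_def by simp
    moreover have "c \<notin> S" using cC SRC by blast
    ultimately show "\<not> lstep V r p c1 S ((c1^^(m-j)) s)" unfolding lstep_def using cz wz by simp
  qed
  then have "lend V r p c1 S (rt p S) = w" using eqfun[of "m-j"] j(1) wz z_def s_def by simp
  then show ?thesis using lend_C[OF FS] by simp
qed

lemma boundary: "F R \<Longrightarrow> w \<in> R \<Longrightarrow> c \<in> children V r p w \<Longrightarrow> c \<notin> R \<Longrightarrow> w \<in> C R"
proof (induction arbitrary: w c rule: canonical.induct)
  case can_top then show ?case using child_facts by blast
next
  case (can_rec R0 S)
  have SRC: "S \<subseteq> R0 - C R0" using comp_D[OF can_rec.hyps(2)] by blast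
  have cR0: "c \<in> R0"
  proof (rule ccontr)
    assume "c \<notin> R0"
    then have "w \<in> C R0" using can_rec.IH[of w c] can_rec.prems SRC by blast
    then show False using can_rec.prems SRC by blast
  qed
  have "c \<in> C R0"
  proof (rule ccontr)
    assume "c \<notin> C R0"
    then have "c \<in> S" using comp_edge[OF can_rec.hyps(2) can_rec.prems(1,2)] cR0 by blast
    then show False using can_rec.prems by blast
  qed
  then show ?case using boundary_inner[OF can_rec.hyps can_rec.prems(1,2)] by blast
qed

lemma G1_child: assumes "F R0" "is_component V p (R0 - C R0) S" "w \<in> S" "z \<in> children V r p w" "z \<notin> S"
  shows "z \<in> C R0"
proof -
  have SRC: "S \<subseteq> R0 - C R0" using comp_D[OF assms(2)] by blast
  have "z \<in> R0" using boundary[OF assms(1) _ assms(4)] assms(3) SRC by blast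
  then show ?thesis using comp_edge[OF assms(2,3,4)] assms(5) by blast
qed

lemma G1_parent: assumes "F R0" "is_component V p (R0 - C R0) S" "w \<in> S" "w \<noteq> r" "p w \<notin> S"
  shows "p w \<in> C R0"
proof -
  have SRC: "S \<subseteq> R0 - C R0" using comp_D[OF assms(2)] by blast
  have stR: "st R0" using F_subtree[OF assms(1)] .
  have wR: "w \<in> R0" using assms(3) SRC by blast
  have "rt p R0 \<noteq> w" using rt_C[OF assms(1)] assms(3) SRC by blast
  then have "anc p (rt p R0) (p w)" using anc_p subtree_D(4)[OF stR wR] by blast
  then have "p w \<in> R0" using subtree_D(5)[OF stR wR] anc_pself by blast
  then show ?thesis using comp_up[OF assms(2,3,4)] assms(5) by blast
qed

lemma parent_ex: "F R \<Longrightarrow> R \<noteq> V \<Longrightarrow> \<exists>R0. F R0 \<and> is_component V p (R0 - C R0) R"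
  by (cases rule: canonical.cases) auto

lemma parent_sub: assumes "F K" "F R0" "is_component V p (R0 - C R0) R" "R \<subset> K" shows "R0 \<subseteq> K"
proof -
  have Rne: "R \<noteq> {}" using comp_nonempty[OF assms(3)] .
  have RR0: "R \<subseteq> R0" using comp_D[OF assms(3)] by blast
  have L: "(K \<subseteq> R0 \<or> R0 \<subseteq> K \<or> K \<inter> R0 = {}) \<and> (K \<subset> R0 \<longrightarrow> (\<exists>S. is_component V p (R0 - C R0) S \<and> K \<subseteq> S))"
    using lam[OF assms(1,2)] .
  show ?thesis
  proof (rule ccontr)
    assume "\<not> R0 \<subseteq> K"
    then have "K \<subset> R0" using L assms(4) RR0 Rne by blast
    then obtain S where S: "is_component V p (R0 - C R0) S" "K \<subseteq> S" using L by blast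
    then have "S = R" using comp_unique[OF S(1) assms(3)] assms(4) Rne by blast
    then show False using S assms(4) by blast
  qed
qed

lemma rs_cost: "snd (route_step V r p c1 k v u) \<le> 2"
  unfolding route_step_def Let_def mv_def by auto

lemma rs_adj: "adjG V r p c1 k u v \<Longrightarrow> fst (route_step V r p c1 k v u) = v"
  unfolding route_step_def by simp

lemma rs1: "\<not> adjG V r p c1 k u v \<Longrightarrow> anc p u v \<Longrightarrow>
  fst (route_step V r p c1 k v u) = child_toward V r p (deepest p {x \<in> C (TT u). anc p x v}) v"
  unfolding route_step_def Let_def CT_eq by simp

lemma rs2: "\<not> adjG V r p c1 k u v \<Longrightarrow> \<not> anc p u v \<Longrightarrow> anc p v u \<Longrightarrow>
  fst (route_step V r p c1 k v u) = p (highest p {x \<in> C (TT u). anc p v x \<and> anc p x u})"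
  unfolding route_step_def Let_def CT_eq by simp

lemma rs3a: "\<not> adjG V r p c1 k u v \<Longrightarrow> \<not> anc p u v \<Longrightarrow> \<not> anc p v u \<Longrightarrow>
  {x \<in> C (TT u). anc p x v \<and> \<not> anc p x u} = {} \<Longrightarrow>
  fst (route_step V r p c1 k v u) = p (highest p {y \<in> C (TT u). anc p y u \<and> \<not> anc p y v})"
  unfolding route_step_def Let_def CT_eq by simp

lemma rs3b: "\<not> adjG V r p c1 k u v \<Longrightarrow> \<not> anc p u v \<Longrightarrow> \<not> anc p v u \<Longrightarrow>
  {x \<in> C (TT u). anc p x v \<and> \<not> anc p x u} \<noteq> {} \<Longrightarrow>
  fst (route_step V r p c1 k v u) = child_toward V r p (deepest p {x \<in> C (TT u). anc p x v \<and> \<not> anc p x u}) v"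
  unfolding route_step_def Let_def CT_eq by (simp only: if_False if_True) simp

lemma adj_C: assumes "u \<in> V" "v \<in> V" "u \<noteq> v" "v \<in> C (TT u)" shows "adjG V r p c1 k u v"
  unfolding adjG_def using assms TT[OF assms(1)] by blast

definition L :: nat where "L = Max (lev ` {R. F R})"

lemma lev_le_L: "F R \<Longrightarrow> lev R \<le> L"
  unfolding L_def by (rule Max_ge) (use Ffam_fin[of "\<lambda>_. True"] in auto)

lemma L_bound: "2 ^ L \<le> card V"
proof -
  have "L \<in> lev ` {R. F R}" unfolding L_def
    by (rule Max_in) (use Ffam_fin[of "\<lambda>_. True"] F_top in auto)
  then obtain R where "F R" "L = lev R" by blast
  then show ?thesis using lev_bound by simp
qed

definition mu :: "'a \<Rightarrow> 'a set \<Rightarrow> nat" where "mu u K = 2 * (L - lev K) + (lev (TT u) - lev K)"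

lemma mu_TT: assumes "u \<in> V" "F K" "u \<in> K" shows "mu u (TT u) \<le> mu u K"
proof -
  have "lev K \<le> lev (TT u)" using lev_mono[OF assms(2) TT_sub[OF assms(2,3)]] .
  moreover have "lev (TT u) \<le> L" using lev_le_L TT assms by blast
  ultimately show ?thesis unfolding mu_def by simp
qed

lemma mu_le: assumes "u \<in> V" shows "mu u V \<le> 3 * L"
proof -
  have "lev (TT u) \<le> L" using lev_le_L TT assms by blast
  then show ?thesis unfolding mu_def lev_V by simp
qed

lemma climb: assumes uV: "u \<in> V" and FK: "F K" and sub: "TT u \<subset> K" and zK: "z \<in> K" and zT: "z \<notin> TT u"
  and wT: "w \<in> TT u" and adj: "z \<in> children V r p w \<or> (w \<noteq> r \<and> z = p w)"
  shows "mu z K < mu u K"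
proof -
  define R where "R = TT u"
  have FR: "F R" using TT uV R_def by blast
  have "R \<noteq> V" using sub F_sub[OF FK] R_def by blast
  then obtain R0 where R0: "F R0" "is_component V p (R0 - C R0) R" using parent_ex FR by blast
  have zC: "z \<in> C R0"
    using adj
  proof
    assume "z \<in> children V r p w" then show ?thesis using G1_child[OF R0 _ _ zT[folded R_def]] wT R_def by blast
  next
    assume "w \<noteq> r \<and> z = p w" then show ?thesis using G1_parent[OF R0, of w] zT wT R_def by blast
  qed
  have TTz: "TT z = R0" using TT_eq[OF R0(1) zC] .
  have "R0 \<subseteq> K" using parent_sub[OF FK R0] sub R_def by blast
  then have "lev K \<le> lev R0" using lev_mono[OF FK] by blast
  moreover have "lev R = Suc (lev R0)" using lev_child[OF R0] .
  ultimately show ?thesis unfolding mu_def TTz R_def[symmetric] by simp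
qed

lemma descend: assumes uV: "u \<in> V" and S: "is_component V p (TT u - C (TT u)) S" and zC: "z \<in> C S"
  shows "mu z S < mu u (TT u)"
proof -
  have FR: "F (TT u)" using TT uV by blast
  have FS: "F S" using F_rec[OF FR S] .
  have TTz: "TT z = S" using TT_eq[OF FS zC] .
  have "lev S = Suc (lev (TT u))" using lev_child[OF FR S] .
  moreover have "lev S \<le> L" using lev_le_L FS by blast
  ultimately show ?thesis unfolding mu_def TTz by simp
qed

abbreviation fstep where "fstep v u \<equiv> fst (route_step V r p c1 k v u)"

lemma step1: assumes uV: "u \<in> V" and vV: "v \<in> V" and uv: "anc p u v" "u \<noteq> v"
  and nadj: "\<not> adjG V r p c1 k u v" and FK: "F K" and uK: "u \<in> K" and vK: "v \<in> K"
  and inv: "v \<notin> TT u \<or> K = TT u"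
  shows "fstep v u = v \<or> (fstep v u \<in> V \<and> anc p (fstep v u) v \<and>
     (\<exists>K'. F K' \<and> fstep v u \<in> K' \<and> v \<in> K' \<and> mu (fstep v u) K' < mu u K))"
proof -
  define R where "R = TT u"
  have FR: "F R" and uC: "u \<in> C R" using TT uV R_def by auto
  have stR: "st R" using F_subtree FR by blast
  have uR: "u \<in> R" using C_sub FR uC by blast
  have RK: "R \<subseteq> K" using TT_sub[OF FK uK] R_def by simp
  have vnC: "v \<notin> C R" using adj_C[OF uV vV uv(2)] nadj R_def by blast
  have CRV: "C R \<subseteq> V" using C_sub[OF FR] F_sub[OF FR] by blast
  have f: "fstep v u = child_toward V r p (deepest p {x \<in> C R. anc p x v}) v"
    using rs1[OF nadj uv(1)] R_def by simp
  show ?thesis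
  proof (cases "v \<in> R")
    case False
    define X' where "X' = {x \<in> R. anc p x v}"
    obtain e where e: "e \<in> X'" "\<And>x. x \<in> X' \<Longrightarrow> anc p x e"
      using deepest_ex[of X' v] uR uv(1) vV unfolding X'_def by blast
    have eR: "e \<in> R" "anc p e v" using e(1) X'_def by auto
    have ev: "e \<noteq> v" using eR False by blast
    define e' where "e' = child_toward V r p e v"
    have e': "e' \<in> children V r p e" "anc p e' v" using child_toward_ex[OF eR(2) ev vV] e'_def by auto
    have e'R: "e' \<notin> R"
    proof
      assume "e' \<in> R"
      then have "anc p e' e" using e(2) e'(2) X'_def by blast
      then show False using not_anc_child[OF e'(1)] by simp
    qed
    have eC: "e \<in> C R" using boundary[OF FR eR(1) e'(1) e'R] .
    have "deepest p {x \<in> C R. anc p x v} = e"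
      by (rule deepest_eq) (use eC eR e(2) CRV C_sub[OF FR] X'_def in auto)
    then have fe: "fstep v u = e'" using f e'_def by simp
    have ue: "anc p u e" using e(2) uR uv(1) X'_def by blast
    have e'K: "e' \<in> K" using convex[OF F_subtree[OF FK] uK vK _ e'(2)] anc_trans[OF ue anc_child[OF e'(1)]] by blast
    have sub: "R \<subset> K" using RK vK False by blast
    have "mu e' K < mu u K" using climb[OF uV FK sub[unfolded R_def] e'K e'R[unfolded R_def] eR(1)[unfolded R_def]] e'(1) by blast
    moreover have "e' \<in> V" using child_facts e'(1) by blast
    ultimately show ?thesis using fe e'(2) e'K FK vK by blast
  next
    case True
    have "v \<in> TT u" using True unfolding R_def .
    then have KR: "K = R" using inv unfolding R_def by blast
    define X where "X = {x \<in> C R. anc p x v}"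
    obtain x where x: "x \<in> X" "\<And>y. y \<in> X \<Longrightarrow> anc p y x"
      using deepest_ex[of X v] uC uv(1) vV unfolding X_def by blast
    have xC: "x \<in> C R" "anc p x v" using x(1) X_def by auto
    have xv: "x \<noteq> v" using xC vnC by blast
    have dx: "deepest p X = x" by (rule deepest_eq) (use x CRV X_def in auto)
    define x' where "x' = child_toward V r p x v"
    have x': "x' \<in> children V r p x" "anc p x' v" using child_toward_ex[OF xC(2) xv vV] x'_def by auto
    have fx: "fstep v u = x'" using f dx x'_def X_def by simp
    show ?thesis
    proof (cases "x' = v")
      case True then show ?thesis using fx by blast
    next
      case False
      have xR: "x \<in> R" using xC C_sub[OF FR] by blast
      have x'R: "x' \<in> R" using convex[OF stR xR True anc_child[OF x'(1)] x'(2)] .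
      have x'C: "x' \<notin> C R"
      proof
        assume "x' \<in> C R"
        then have "anc p x' x" using x(2) x'(2) X_def by blast
        then show False using not_anc_child[OF x'(1)] by simp
      qed
      have RCV: "R - C R \<subseteq> V" using F_sub[OF FR] by blast
      obtain S where S: "is_component V p (R - C R) S" "x' \<in> S" using comp_exists[OF RCV] x'R x'C by blast
      define P where "P = {z. anc p x' z \<and> anc p z v}"
      have stP: "st P" using subtree_path[OF vV x'(2)] P_def by simp
      have PRC: "P \<subseteq> R - C R"
      proof
        fix z assume z: "z \<in> P"
        then have zR: "z \<in> R" using convex[OF stR x'R True] P_def by blast
        have "z \<notin> C R"
        proof
          assume "z \<in> C R"
          then have "anc p z x" using x(2) z P_def X_def by blast
          then have "anc p x' x" using anc_trans z P_def by blast
          then show False using not_anc_child[OF x'(1)] by simp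
        qed
        then show "z \<in> R - C R" using zR by blast
      qed
      have "x' \<in> P" using x'(2) P_def by simp
      then have "P \<subseteq> S" using comp_absorb[OF S(1) stP PRC _ S(2)] by blast
      moreover have "v \<in> P" using x'(2) P_def by simp
      ultimately have vS: "v \<in> S" by blast
      have stS: "st S" using comp_D[OF S(1)] by blast
      have "p x' = x" using child_facts[OF x'(1)] by simp
      then have "p x' \<notin> S" using xC comp_D[OF S(1)] by blast
      then have "rt p S = x'" using subtree_root_up[OF stS S(2)] by simp
      then have x'CS: "x' \<in> C S" using rt_C[OF F_rec[OF FR S(1)]] by simp
      have "mu x' S < mu u R" using descend[OF uV S(1)[unfolded R_def] x'CS] R_def by simp
      moreover have "x' \<in> V" using child_facts x'(1) by blast
      ultimately show ?thesis using fx x'(2) S(2) vS F_rec[OF FR S(1)] KR by blast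
    qed
  qed
qed

lemma step2: assumes uV: "u \<in> V" and vV: "v \<in> V" and uv: "anc p v u" "u \<noteq> v" "\<not> anc p u v"
  and nadj: "\<not> adjG V r p c1 k u v" and FK: "F K" and uK: "u \<in> K" and vK: "v \<in> K"
  and inv: "v \<notin> TT u \<or> K = TT u"
  shows "fstep v u = v \<or> (fstep v u \<in> V \<and> anc p v (fstep v u) \<and>
     (\<exists>K'. F K' \<and> fstep v u \<in> K' \<and> v \<in> K' \<and> mu (fstep v u) K' < mu u K))"
proof -
  define R where "R = TT u"
  have FR: "F R" and uC: "u \<in> C R" using TT uV R_def by auto
  have stR: "st R" using F_subtree FR by blast
  have uR: "u \<in> R" using C_sub FR uC by blast
  have RK: "R \<subseteq> K" using TT_sub[OF FK uK] R_def by simp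
  have vnC: "v \<notin> C R" using adj_C[OF uV vV uv(2)] nadj R_def by blast
  have CRV: "C R \<subseteq> V" using C_sub[OF FR] F_sub[OF FR] by blast
  define X where "X = {x \<in> C R. anc p v x \<and> anc p x u}"
  have f: "fstep v u = p (highest p X)"
    using rs2[OF nadj uv(3,1)] R_def X_def by simp
  show ?thesis
  proof (cases "v \<in> R")
    case False
    define h where "h = rt p R"
    have hC: "h \<in> C R" using rt_C[OF FR] h_def by simp
    have hR: "h \<in> R" "anc p h u" using subtree_D(3,4)[OF stR] uR h_def by auto
    have vh: "anc p v h"
    proof -
      have "anc p v h \<or> anc p h v" using anc_lin[OF uv(1) hR(2)] .
      moreover have "\<not> anc p h v"
      proof
        assume "anc p h v" then have "v \<in> R" using convex[OF stR hR(1) uR _ uv(1)] by blast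
        then show False using False by blast
      qed
      ultimately show ?thesis by blast
    qed
    have hX: "h \<in> X" using hC vh hR X_def by simp
    have "highest p X = h" by (rule highest_eq) (use hX CRV C_sub[OF FR] subtree_D(4)[OF stR] h_def X_def in auto)
    then have fh: "fstep v u = p h" using f by simp
    have hv: "h \<noteq> v" using hR False by blast
    have hV: "h \<in> V" using hR subtree_D(1)[OF stR] by blast
    have hr: "h \<noteq> r"
    proof
      assume "h = r" then have "v = r" using vh anc_of_r by simp
      then show False using hv \<open>h = r\<close> by simp
    qed
    have hch: "h \<in> children V r p (p h)" using childI[OF hV hr] .
    have phR: "p h \<notin> R"
    proof
      assume "p h \<in> R"
      then have "anc p h (p h)" using subtree_D(4)[OF stR] h_def by simp
      then show False using not_anc_child[OF hch] by simp
    qed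
    have vph: "anc p v (p h)" using anc_p[OF vh hv[symmetric]] .
    have phu: "anc p (p h) u" using anc_trans[OF anc_pself hR(2)] .
    have phK: "p h \<in> K" using convex[OF F_subtree[OF FK] vK uK vph phu] .
    have sub: "R \<subset> K" using RK vK False by blast
    have "mu (p h) K < mu u K" using climb[OF uV FK sub[unfolded R_def] phK phR[unfolded R_def] hR(1)[unfolded R_def]] hr by blast
    moreover have "p h \<in> V" using pV hV by blast
    ultimately have "p h \<in> V \<and> anc p v (p h) \<and> (\<exists>K'. F K' \<and> p h \<in> K' \<and> v \<in> K' \<and> mu (p h) K' < mu u K)"
      using vph phK FK vK by blast
    then show ?thesis unfolding fh by (rule disjI2)
  next
    case True
    have "v \<in> TT u" using True unfolding R_def .
    then have KR: "K = R" using inv unfolding R_def by blast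
    obtain h where h: "h \<in> X" "\<And>y. y \<in> X \<Longrightarrow> anc p h y"
      using highest_ex[of X u] uC uv(1) uV anc_refl[of u] unfolding X_def by blast
    have hC: "h \<in> C R" "anc p v h" "anc p h u" using h(1) X_def by auto
    have hv: "h \<noteq> v" using hC vnC by blast
    have hh: "highest p X = h" by (rule highest_eq) (use h CRV X_def in auto)
    have fh: "fstep v u = p h" using f hh by simp
    have hR: "h \<in> R" using hC C_sub[OF FR] by blast
    have hV: "h \<in> V" using hR subtree_D(1)[OF stR] by blast
    have hr: "h \<noteq> r"
    proof
      assume "h = r" then have "v = r" using hC anc_of_r by simp
      then show False using hv \<open>h = r\<close> by simp
    qed
    have hch: "h \<in> children V r p (p h)" using childI[OF hV hr] .
    show ?thesis
    proof (cases "p h = v")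
      case True then show ?thesis unfolding fh by (rule disjI1)
    next
      case False
      have vph: "anc p v (p h)" using anc_p[OF hC(2) hv[symmetric]] .
      have phR: "p h \<in> R" using convex[OF stR True hR vph anc_pself] .
      have phC: "p h \<notin> C R"
      proof
        assume "p h \<in> C R"
        then have "p h \<in> X" using vph anc_trans[OF anc_pself hC(3)] X_def by simp
        then have "anc p h (p h)" using h(2) by blast
        then show False using not_anc_child[OF hch] by simp
      qed
      have RCV: "R - C R \<subseteq> V" using F_sub[OF FR] by blast
      obtain S where S: "is_component V p (R - C R) S" "p h \<in> S" using comp_exists[OF RCV] phR phC by blast
      define P where "P = {z. anc p v z \<and> anc p z (p h)}"
      have phV: "p h \<in> V" using pV hV by blast
      have stP: "st P" using subtree_path[OF phV vph] P_def by simp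
      have PRC: "P \<subseteq> R - C R"
      proof
        fix z assume z: "z \<in> P"
        then have zR: "z \<in> R" using convex[OF stR True phR] P_def by blast
        have "z \<notin> C R"
        proof
          assume "z \<in> C R"
          moreover have "anc p z u" using z P_def anc_trans[OF anc_pself hC(3)] anc_trans by blast
          ultimately have "z \<in> X" using z P_def X_def by blast
          then have "anc p h z" using h(2) by blast
          then have "anc p h (p h)" using anc_trans z P_def by blast
          then show False using not_anc_child[OF hch] by simp
        qed
        then show "z \<in> R - C R" using zR by blast
      qed
      have "p h \<in> P" using vph P_def by simp
      then have "P \<subseteq> S" using comp_absorb[OF S(1) stP PRC _ S(2)] by blast
      moreover have "v \<in> P" using vph P_def by simp
      ultimately have vS: "v \<in> S" by blast
      have "h \<notin> S" using hC comp_D[OF S(1)] by blast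
      then have phCS: "p h \<in> C S" using boundary[OF F_rec[OF FR S(1)] S(2) hch] by blast
      have "mu (p h) S < mu u R" using descend[OF uV S(1)[unfolded R_def] phCS] R_def by simp
      then have "p h \<in> V \<and> anc p v (p h) \<and> (\<exists>K'. F K' \<and> p h \<in> K' \<and> v \<in> K' \<and> mu (p h) K' < mu u K)"
        using vph S(2) vS F_rec[OF FR S(1)] KR phV by blast
      then show ?thesis unfolding fh by (rule disjI2)
    qed
  qed
qed

lemma step3: assumes uV: "u \<in> V" and vV: "v \<in> V" and inc: "\<not> anc p u v" "\<not> anc p v u"
  and a': "anc p a' u" "\<not> anc p a' v" "anc p (p a') v"
  and nadj: "\<not> adjG V r p c1 k u v" and FK: "F K" and uK: "u \<in> K" and aK: "a' \<in> K"
  and inv: "a' \<notin> TT u \<or> K = TT u"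
  shows "fstep v u \<in> V \<and> (anc p (fstep v u) v \<or>
     (anc p a' (fstep v u) \<and> \<not> anc p (fstep v u) v \<and> \<not> anc p v (fstep v u) \<and>
     (\<exists>K'. F K' \<and> fstep v u \<in> K' \<and> a' \<in> K' \<and> mu (fstep v u) K' < mu u K)))"
proof -
  define R where "R = TT u"
  have FR: "F R" and uC: "u \<in> C R" using TT uV R_def by auto
  have stR: "st R" using F_subtree FR by blast
  have uR: "u \<in> R" using C_sub FR uC by blast
  have RK: "R \<subseteq> K" using TT_sub[OF FK uK] R_def by simp
  have uv: "u \<noteq> v" using inc by auto
  have vnC: "v \<notin> C R" using adj_C[OF uV vV uv] nadj R_def by blast
  have CRV: "C R \<subseteq> V" using C_sub[OF FR] F_sub[OF FR] by blast
  have a'V: "a' \<in> V" using anc_V a'(1) uV by blast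
  define X where "X = {x \<in> C R. anc p x v \<and> \<not> anc p x u}"
  define Y where "Y = {y \<in> C R. anc p y u \<and> \<not> anc p y v}"
  have helper: "\<And>y. anc p y u \<Longrightarrow> \<not> anc p y v \<Longrightarrow> anc p a' y"
  proof -
    fix y assume y: "anc p y u" "\<not> anc p y v"
    have "anc p y a' \<or> anc p a' y" using anc_lin[OF y(1) a'(1)] .
    moreover have "anc p y a' \<Longrightarrow> y \<noteq> a' \<Longrightarrow> False"
      using anc_p[of y a'] anc_trans[of y "p a'" v] a'(3) y(2) by blast
    ultimately show "anc p a' y" by auto
  qed
  show ?thesis
  proof (cases "X = {}")
    case False
    have "{x \<in> C (TT u). anc p x v \<and> \<not> anc p x u} \<noteq> {}" using False unfolding X_def R_def .
    then have f: "fstep v u = child_toward V r p (deepest p X) v"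
      using rs3b[OF nadj inc] unfolding R_def X_def by simp
    obtain x where x: "x \<in> X" "\<And>y. y \<in> X \<Longrightarrow> anc p y x"
      using deepest_ex[of X v] False vV unfolding X_def by blast
    have dx: "deepest p X = x" by (rule deepest_eq) (use x CRV X_def in auto)
    have xv: "x \<noteq> v" "anc p x v" using x(1) vnC X_def by auto
    have "child_toward V r p x v \<in> children V r p x \<and> anc p (child_toward V r p x v) v"
      using child_toward_ex[OF xv(2) xv(1) vV] .
    then have "fstep v u \<in> V \<and> anc p (fstep v u) v" unfolding f dx using child_facts by blast
    then show ?thesis by blast
  next
    case True
    have "{x \<in> C (TT u). anc p x v \<and> \<not> anc p x u} = {}" using True unfolding X_def R_def .
    then have f: "fstep v u = p (highest p Y)"
      using rs3a[OF nadj inc] unfolding R_def Y_def by simp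
    show ?thesis
    proof (cases "a' \<in> R")
      case False
      define h where "h = rt p R"
      have hC: "h \<in> C R" using rt_C[OF FR] h_def by simp
      have hR: "h \<in> R" "anc p h u" using subtree_D(3,4)[OF stR] uR h_def by auto
      have ah: "anc p a' h"
      proof -
        have "anc p h a' \<or> anc p a' h" using anc_lin[OF hR(2) a'(1)] .
        moreover have "\<not> anc p h a'"
        proof
          assume "anc p h a'" then have "a' \<in> R" using convex[OF stR hR(1) uR _ a'(1)] by blast
          then show False using False by blast
        qed
        ultimately show ?thesis by blast
      qed
      have ha: "h \<noteq> a'" using hR False by blast
      have hnv: "\<not> anc p h v" using ah a'(2) anc_trans by blast
      have hY: "h \<in> Y" using hC hR hnv Y_def by simp
      have "highest p Y = h" by (rule highest_eq) (use hY CRV C_sub[OF FR] subtree_D(4)[OF stR] h_def Y_def in auto)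
      then have fh: "fstep v u = p h" using f by simp
      have hV: "h \<in> V" using hR subtree_D(1)[OF stR] by blast
      have hr: "h \<noteq> r"
      proof
        assume "h = r" then have "a' = r" using ah anc_of_r by simp
        then show False using ha \<open>h = r\<close> by simp
      qed
      have hch: "h \<in> children V r p (p h)" using childI[OF hV hr] .
      have phR: "p h \<notin> R"
      proof
        assume "p h \<in> R"
        then have "anc p h (p h)" using subtree_D(4)[OF stR] h_def by simp
        then show False using not_anc_child[OF hch] by simp
      qed
      have aph: "anc p a' (p h)" using anc_p[OF ah ha[symmetric]] .
      have phu: "anc p (p h) u" using anc_trans[OF anc_pself hR(2)] .
      have phK: "p h \<in> K" using convex[OF F_subtree[OF FK] aK uK aph phu] .
      have sub: "R \<subset> K" using RK aK False by blast
      have "mu (p h) K < mu u K" using climb[OF uV FK sub[unfolded R_def] phK phR[unfolded R_def] hR(1)[unfolded R_def]] hr by blast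
      moreover have "p h \<in> V" using pV hV by blast
      moreover have "\<not> anc p (p h) v" using aph a'(2) anc_trans by blast
      moreover have "\<not> anc p v (p h)" using phu inc(2) anc_trans by blast
      ultimately have "p h \<in> V \<and> (anc p a' (p h) \<and> \<not> anc p (p h) v \<and> \<not> anc p v (p h) \<and>
        (\<exists>K'. F K' \<and> p h \<in> K' \<and> a' \<in> K' \<and> mu (p h) K' < mu u K))" using aph phK FK aK by blast
      then show ?thesis unfolding fh by blast
    next
      case aR: True
      have "a' \<in> TT u" using aR unfolding R_def .
      then have KR: "K = R" using inv unfolding R_def by blast
      have uY: "u \<in> Y" using uC inc(1) Y_def by simp
      obtain h where h: "h \<in> Y" "\<And>y. y \<in> Y \<Longrightarrow> anc p h y"
        using highest_ex[of Y u] uY uV unfolding Y_def by blast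
      have hC: "h \<in> C R" "anc p h u" "\<not> anc p h v" using h(1) Y_def by auto
      have ah: "anc p a' h" using helper hC(2,3) .
      have hh: "highest p Y = h" by (rule highest_eq) (use h CRV Y_def in auto)
      have fh: "fstep v u = p h" using f hh by simp
      have hR: "h \<in> R" using hC C_sub[OF FR] by blast
      have hV: "h \<in> V" using hR subtree_D(1)[OF stR] by blast
      show ?thesis
      proof (cases "h = a'")
        case True
        then have "p h \<in> V \<and> anc p (p h) v" using a'(3) pV hV by simp
        then show ?thesis unfolding fh by blast
      next
        case False
        have hr: "h \<noteq> r"
        proof
          assume "h = r" then have "a' = r" using ah anc_of_r by simp
          then show False using False \<open>h = r\<close> by simp
        qed
        have hch: "h \<in> children V r p (p h)" using childI[OF hV hr] .
        have aph: "anc p a' (p h)" using anc_p[OF ah] False by metis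
        have phu: "anc p (p h) u" using anc_trans[OF anc_pself hC(2)] .
        have phnv: "\<not> anc p (p h) v" using aph a'(2) anc_trans by blast
        have vnph: "\<not> anc p v (p h)" using phu inc(2) anc_trans by blast
        have phR: "p h \<in> R" using convex[OF stR aR uR aph phu] .
        have phC: "p h \<notin> C R"
        proof
          assume "p h \<in> C R"
          then have "p h \<in> Y" using phu phnv Y_def by simp
          then have "anc p h (p h)" using h(2) by blast
          then show False using not_anc_child[OF hch] by simp
        qed
        have RCV: "R - C R \<subseteq> V" using F_sub[OF FR] by blast
        obtain S where S: "is_component V p (R - C R) S" "p h \<in> S" using comp_exists[OF RCV] phR phC by blast
        define P where "P = {z. anc p a' z \<and> anc p z (p h)}"
        have phV: "p h \<in> V" using pV hV by blast
        have stP: "st P" using subtree_path[OF phV aph] P_def by simp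
        have PRC: "P \<subseteq> R - C R"
        proof
          fix z assume z: "z \<in> P"
          then have zR: "z \<in> R" using convex[OF stR aR phR] P_def by blast
          have "z \<notin> C R"
          proof
            assume "z \<in> C R"
            moreover have "anc p z u" using z P_def anc_trans[OF _ phu] by blast
            moreover have "\<not> anc p z v" using z P_def a'(2) anc_trans by blast
            ultimately have "z \<in> Y" using Y_def by blast
            then have "anc p h z" using h(2) by blast
            then have "anc p h (p h)" using anc_trans z P_def by blast
            then show False using not_anc_child[OF hch] by simp
          qed
          then show "z \<in> R - C R" using zR by blast
        qed
        have "p h \<in> P" using aph P_def by simp
        then have "P \<subseteq> S" using comp_absorb[OF S(1) stP PRC _ S(2)] by blast
        moreover have "a' \<in> P" using aph P_def by simp
        ultimately have aS: "a' \<in> S" by blast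
        have "h \<notin> S" using hC comp_D[OF S(1)] by blast
        then have phCS: "p h \<in> C S" using boundary[OF F_rec[OF FR S(1)] S(2) hch] by blast
        have "mu (p h) S < mu u R" using descend[OF uV S(1)[unfolded R_def] phCS] R_def by simp
        then have "p h \<in> V \<and> (anc p a' (p h) \<and> \<not> anc p (p h) v \<and> \<not> anc p v (p h) \<and>
          (\<exists>K'. F K' \<and> p h \<in> K' \<and> a' \<in> K' \<and> mu (p h) K' < mu u K))"
          using aph phnv vnph S(2) aS F_rec[OF FR S(1)] KR phV by blast
        then show ?thesis unfolding fh by blast
      qed
    qed
  qed
qed

definition reach :: "'a \<Rightarrow> 'a \<Rightarrow> nat \<Rightarrow> bool" where
  "reach v u n \<longleftrightarrow> (\<exists>N\<le>n. ((\<lambda>x. fst (route_step V r p c1 k v x)) ^^ N) u = v)"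

lemma reach0: "reach v v n"
  unfolding reach_def by (intro exI[of _ 0]) simp

lemma reach_step: assumes "reach v (fstep v u) n" shows "reach v u (Suc n)"
proof -
  obtain N where N: "N \<le> n" "((\<lambda>x. fst (route_step V r p c1 k v x)) ^^ N) (fstep v u) = v"
    using assms unfolding reach_def by blast
  have "((\<lambda>x. fst (route_step V r p c1 k v x)) ^^ Suc N) u = v"
    using N(2) by (simp add: funpow_Suc_right del: funpow.simps)
  then show ?thesis unfolding reach_def using N(1) by (intro exI[of _ "Suc N"]) simp
qed

lemma reach_mono: "reach v u n \<Longrightarrow> n \<le> m \<Longrightarrow> reach v u m"
  unfolding reach_def by (meson order_trans)

lemma reach_adj: assumes "adjG V r p c1 k u v" shows "reach v u 1"
proof -
  have "reach v (fstep v u) 0" using rs_adj[OF assms] reach0 by simp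
  then show ?thesis using reach_step by fastforce
qed

lemma phase1: "v \<in> V \<Longrightarrow> u \<in> V \<Longrightarrow> anc p u v \<Longrightarrow> F K \<Longrightarrow> u \<in> K \<Longrightarrow> v \<in> K \<Longrightarrow> reach v u (Suc (mu u K))"
proof (induction "mu u K" arbitrary: u K rule: less_induct)
  case less
  show ?case
  proof (cases "u = v")
    case True then show ?thesis using reach0 by simp
  next
    case uv: False
    show ?thesis
    proof (cases "adjG V r p c1 k u v")
      case True then show ?thesis using reach_adj reach_mono by fastforce
    next
      case nadj: False
      define K0 where "K0 = (if v \<in> TT u then TT u else K)"
      have FK0: "F K0" using K0_def TT less.prems by auto
      have uK0: "u \<in> K0" using K0_def TT less.prems C_sub by auto
      have vK0: "v \<in> K0" using K0_def less.prems by auto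
      have inv: "v \<notin> TT u \<or> K0 = TT u" using K0_def by auto
      have mK0: "mu u K0 \<le> mu u K" using K0_def mu_TT[OF less.prems(2,4,5)] by auto
      have "fstep v u = v \<or> (fstep v u \<in> V \<and> anc p (fstep v u) v \<and>
         (\<exists>K'. F K' \<and> fstep v u \<in> K' \<and> v \<in> K' \<and> mu (fstep v u) K' < mu u K0))"
        using step1[OF less.prems(2,1,3) uv nadj FK0 uK0 vK0 inv] .
      then show ?thesis
      proof
        assume "fstep v u = v"
        then have "reach v (fstep v u) 0" using reach0 by simp
        then show ?thesis using reach_step reach_mono by fastforce
      next
        assume "fstep v u \<in> V \<and> anc p (fstep v u) v \<and>
         (\<exists>K'. F K' \<and> fstep v u \<in> K' \<and> v \<in> K' \<and> mu (fstep v u) K' < mu u K0)"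
        then obtain K' where K': "fstep v u \<in> V" "anc p (fstep v u) v" "F K'" "fstep v u \<in> K'" "v \<in> K'"
          "mu (fstep v u) K' < mu u K0" by blast
        have lt: "mu (fstep v u) K' < mu u K" using K'(6) mK0 by simp
        have "reach v (fstep v u) (Suc (mu (fstep v u) K'))"
          using less.hyps[OF lt less.prems(1) K'(1,2,3,4,5)] .
        then have "reach v u (Suc (Suc (mu (fstep v u) K')))" by (rule reach_step)
        then show ?thesis using reach_mono lt by fastforce
      qed
    qed
  qed
qed

lemma phase2: "v \<in> V \<Longrightarrow> u \<in> V \<Longrightarrow> anc p v u \<Longrightarrow> F K \<Longrightarrow> u \<in> K \<Longrightarrow> v \<in> K \<Longrightarrow> reach v u (Suc (mu u K))"
proof (induction "mu u K" arbitrary: u K rule: less_induct)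
  case less
  show ?case
  proof (cases "u = v")
    case True then show ?thesis using reach0 by simp
  next
    case uv: False
    have nuv: "\<not> anc p u v" using anc_antisym less.prems(1,2,3) uv by blast
    show ?thesis
    proof (cases "adjG V r p c1 k u v")
      case True then show ?thesis using reach_adj reach_mono by fastforce
    next
      case nadj: False
      define K0 where "K0 = (if v \<in> TT u then TT u else K)"
      have FK0: "F K0" using K0_def TT less.prems by auto
      have uK0: "u \<in> K0" using K0_def TT less.prems C_sub by auto
      have vK0: "v \<in> K0" using K0_def less.prems by auto
      have inv: "v \<notin> TT u \<or> K0 = TT u" using K0_def by auto
      have mK0: "mu u K0 \<le> mu u K" using K0_def mu_TT[OF less.prems(2,4,5)] by auto
      have "fstep v u = v \<or> (fstep v u \<in> V \<and> anc p v (fstep v u) \<and>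
         (\<exists>K'. F K' \<and> fstep v u \<in> K' \<and> v \<in> K' \<and> mu (fstep v u) K' < mu u K0))"
        using step2[OF less.prems(2,1,3) uv nuv nadj FK0 uK0 vK0 inv] .
      then show ?thesis
      proof
        assume "fstep v u = v"
        then have "reach v (fstep v u) 0" using reach0 by simp
        then show ?thesis using reach_step reach_mono by fastforce
      next
        assume "fstep v u \<in> V \<and> anc p v (fstep v u) \<and>
         (\<exists>K'. F K' \<and> fstep v u \<in> K' \<and> v \<in> K' \<and> mu (fstep v u) K' < mu u K0)"
        then obtain K' where K': "fstep v u \<in> V" "anc p v (fstep v u)" "F K'" "fstep v u \<in> K'" "v \<in> K'"
          "mu (fstep v u) K' < mu u K0" by blast
        have lt: "mu (fstep v u) K' < mu u K" using K'(6) mK0 by simp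
        have "reach v (fstep v u) (Suc (mu (fstep v u) K'))"
          using less.hyps[OF lt less.prems(1) K'(1,2,3,4,5)] .
        then have "reach v u (Suc (Suc (mu (fstep v u) K')))" by (rule reach_step)
        then show ?thesis using reach_mono lt by fastforce
      qed
    qed
  qed
qed

lemma phase3: "v \<in> V \<Longrightarrow> u \<in> V \<Longrightarrow> \<not> anc p u v \<Longrightarrow> \<not> anc p v u \<Longrightarrow> anc p a' u \<Longrightarrow> \<not> anc p a' v \<Longrightarrow>
  anc p (p a') v \<Longrightarrow> F K \<Longrightarrow> u \<in> K \<Longrightarrow> a' \<in> K \<Longrightarrow> reach v u (mu u K + 3 * L + 2)"
proof (induction "mu u K" arbitrary: u K rule: less_induct)
  case less
  show ?case
  proof (cases "adjG V r p c1 k u v")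
    case True then show ?thesis using reach_adj reach_mono by fastforce
  next
    case nadj: False
    define K0 where "K0 = (if a' \<in> TT u then TT u else K)"
    have FK0: "F K0" using K0_def TT less.prems by auto
    have uK0: "u \<in> K0" using K0_def TT less.prems C_sub by auto
    have aK0: "a' \<in> K0" using K0_def less.prems by auto
    have inv: "a' \<notin> TT u \<or> K0 = TT u" using K0_def by auto
    have mK0: "mu u K0 \<le> mu u K" using K0_def mu_TT[OF less.prems(2,8,9)] by auto
    have st: "fstep v u \<in> V \<and> (anc p (fstep v u) v \<or>
     (anc p a' (fstep v u) \<and> \<not> anc p (fstep v u) v \<and> \<not> anc p v (fstep v u) \<and>
     (\<exists>K'. F K' \<and> fstep v u \<in> K' \<and> a' \<in> K' \<and> mu (fstep v u) K' < mu u K0)))"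
      using step3[OF less.prems(2,1,3,4,5,6,7) nadj FK0 uK0 aK0 inv] .
    then have fV: "fstep v u \<in> V" by blast
    show ?thesis
    proof (cases "anc p (fstep v u) v")
      case True
      have "reach v (fstep v u) (Suc (mu (fstep v u) V))"
        using phase1[OF less.prems(1) fV True F_top fV less.prems(1)] .
      then have "reach v u (Suc (Suc (mu (fstep v u) V)))" by (rule reach_step)
      moreover have "mu (fstep v u) V \<le> 3 * L" using mu_le fV by blast
      ultimately show ?thesis using reach_mono by fastforce
    next
      case False
      then obtain K' where K': "anc p a' (fstep v u)" "\<not> anc p (fstep v u) v" "\<not> anc p v (fstep v u)"
        "F K'" "fstep v u \<in> K'" "a' \<in> K'" "mu (fstep v u) K' < mu u K0" using st by blast
      have lt: "mu (fstep v u) K' < mu u K" using K'(7) mK0 by simp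
      have "reach v (fstep v u) (mu (fstep v u) K' + 3 * L + 2)"
        using less.hyps[OF lt less.prems(1) fV K'(2,3,1) less.prems(6,7) K'(4,5,6)] .
      then have "reach v u (Suc (mu (fstep v u) K' + 3 * L + 2))" by (rule reach_step)
      then show ?thesis using reach_mono lt by fastforce
    qed
  qed
qed

lemma main_reach: assumes "u \<in> V" "v \<in> V" shows "reach v u (6 * L + 2)"
proof (cases "anc p u v")
  case True
  have "reach v u (Suc (mu u V))" using phase1[OF assms(2,1) True F_top assms] .
  then show ?thesis using mu_le[OF assms(1)] reach_mono by fastforce
next
  case nuv: False
  show ?thesis
  proof (cases "anc p v u")
    case True
    have "reach v u (Suc (mu u V))" using phase2[OF assms(2,1) True F_top assms] .
    then show ?thesis using mu_le[OF assms(1)] reach_mono by fastforce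
  next
    case nvu: False
    define CA where "CA = {x. anc p x u \<and> anc p x v}"
    have "r \<in> CA" using ancr assms CA_def by simp
    then obtain a where a: "a \<in> CA" "\<And>x. x \<in> CA \<Longrightarrow> anc p x a"
      using deepest_ex[of CA v] assms(2) CA_def by blast
    have au: "anc p a u" "anc p a v" using a(1) CA_def by auto
    have "a \<noteq> u" using au(2) nuv by blast
    then obtain a' where a': "a' \<in> children V r p a" "anc p a' u"
      using anc_strict_child[OF au(1) _ assms(1)] by blast
    have pa: "p a' = a" using child_facts[OF a'(1)] by simp
    have a'V: "a' \<in> V" using child_facts[OF a'(1)] by simp
    have na: "\<not> anc p a' v"
    proof
      assume "anc p a' v"
      then have "anc p a' a" using a(2) a'(2) CA_def by blast
      then show False using not_anc_child[OF a'(1)] by simp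
    qed
    have "reach v u (mu u V + 3 * L + 2)"
      using phase3[OF assms(2,1) nuv nvu a'(2) na _ F_top assms(1) a'V] au(2) pa by simp
    then show ?thesis using mu_le[OF assms(1)] reach_mono by fastforce
  qed
qed

theorem main: assumes uV: "u \<in> V" and vV: "v \<in> V"
  shows "\<exists>N. route_pos V r p c1 k u v N = v \<and> (\<forall>i<N. route_pos V r p c1 k u v i \<noteq> v) \<and>
           real (\<Sum>i<N. snd (route_step V r p c1 k v (route_pos V r p c1 k u v i)))
             \<le> 18 * log 2 (real (card V))"
proof -
  define g where "g = (\<lambda>x. fst (route_step V r p c1 k v x))"
  have rp: "route_pos V r p c1 k u v i = (g ^^ i) u" for i unfolding route_pos_def g_def by simp
  obtain M where M: "M \<le> 6 * L + 2" "(g ^^ M) u = v" using main_reach[OF uV vV] unfolding reach_def g_def by blast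
  define N where "N = (LEAST N. (g ^^ N) u = v)"
  have N1: "(g ^^ N) u = v" unfolding N_def using M(2) by (rule LeastI)
  have N2: "N \<le> M" unfolding N_def using M(2) by (rule Least_le)
  have N3: "\<forall>i<N. (g ^^ i) u \<noteq> v" unfolding N_def using not_less_Least by blast
  have sumb: "(\<Sum>i<N. snd (route_step V r p c1 k v ((g ^^ i) u))) \<le> N * 2"
    using sum_bounded_above[of "{..<N}" "\<lambda>i. snd (route_step V r p c1 k v ((g ^^ i) u))" 2] rs_cost by simp
  have "V \<noteq> {}" using rV by blast
  then have "card V > 0" using finV by (simp add: card_gt_0_iff)
  then have cV: "card V \<ge> 1" by simp
  have "real (\<Sum>i<N. snd (route_step V r p c1 k v ((g ^^ i) u))) \<le> 18 * log 2 (real (card V))"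
  proof (cases "u = v")
    case True
    then have "N = 0" unfolding N_def by (simp add: Least_eq_0)
    moreover have "0 \<le> log 2 (real (card V))" using cV by simp
    ultimately show ?thesis by simp
  next
    case False
    have "{u, v} \<subseteq> V" using uV vV by simp
    then have "card {u, v} \<le> card V" using card_mono finV by blast
    then have c2: "card V \<ge> 2" using False by simp
    have lg1: "1 \<le> log 2 (real (card V))" using c2 by simp
    have "real (2 ^ L) \<le> real (card V)" using L_bound by linarith
    then have "(2::real) powr (real L) \<le> real (card V)" by (simp add: powr_realpow)
    moreover have "0 < real (card V)" using c2 by simp
    ultimately have lL: "real L \<le> log 2 (real (card V))" using le_log_iff[of 2 "real (card V)" "real L"] by simp
    have "real (\<Sum>i<N. snd (route_step V r p c1 k v ((g ^^ i) u))) \<le> real (N * 2)" using sumb by linarith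
    also have "\<dots> \<le> real ((6 * L + 2) * 2)" using N2 M(1) by simp
    also have "\<dots> = 12 * real L + 4" by simp
    also have "\<dots> \<le> 18 * log 2 (real (card V))" using lL lg1 by linarith
    finally show ?thesis .
  qed
  then show ?thesis unfolding rp using N1 N3 by blast
qed

end

theorem theorem3:
  fixes k :: nat
  assumes "k \<ge> 4"
  shows "\<exists>c::real. \<forall>(V::nat set) r p c1 u v.
           rooted_tree V r p \<and> leftmost_choice V r p c1 \<and> u \<in> V \<and> v \<in> V \<longrightarrow>
           (\<exists>N. route_pos V r p c1 k u v N = v \<and> (\<forall>i<N. route_pos V r p c1 k u v i \<noteq> v) \<and>
                real (\<Sum>i<N. snd (route_step V r p c1 k v (route_pos V r p c1 k u v i)))
                  \<le> c * log 2 (real (card V)))"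
proof (rule exI[of _ 18], intro allI impI)
  fix V :: "nat set" and r p c1 u v
  assume h: "rooted_tree V r p \<and> leftmost_choice V r p c1 \<and> u \<in> V \<and> v \<in> V"
  have "RT V r p c1 k" unfolding RT_def using h assms by blast
  then interpret RT V r p c1 k .
  show "\<exists>N. route_pos V r p c1 k u v N = v \<and> (\<forall>i<N. route_pos V r p c1 k u v i \<noteq> v) \<and>
                real (\<Sum>i<N. snd (route_step V r p c1 k v (route_pos V r p c1 k u v i)))
                  \<le> 18 * log 2 (real (card V))"
    using main h by blast
qed

end
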